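(* Fix $d\ge1$ and partitions $\mu,\lambda$ with $\ell(\mu),\ell(\lambda)\le d$. Then $$G_\mu(\mathbf y_\lambda\mid\mathbf y)\,\big(wt(\lambda/\mu)-1\big)=\sum_{\nu\mapsto\mu}\beta^{|\nu/\mu|}G_\nu(\mathbf y_\lambda\mid\mathbf y),\qquad\text{where}\quad wt(\lambda/\mu):=\prod_{i=1}^d\frac{1+\beta y_{\mu_i+d-i+1}}{1+\beta y_{\lambda_i+d-i+1}}.$$
   Context: Let $\beta$, $y_1,y_2,\dots$ be indeterminates; $x\oplus y:=x+y+\beta xy$, $x\ominus y:=(x-y)/(1+\beta y)$, $\ominus x:=0\ominus x$. Partitions are identified with Young diagrams (English convention), with $\lambda_i=0$ for $i>\ell(\lambda)$. For a partition $\mu$, $\operatorname{SSVT}_d(\mu)$ is the set of assignments of a nonempty subset $T(u)\subseteq\{1,\dots,d\}$ to each cell $u$ of $\mu$ with $\max T(u)\le\min T(u')$ for $u'$ immediately right of $u$ and $\max T(u)<\min T(u')$ for $u'$ immediately below $u$; $\operatorname{ne}(T)=\sum_u|T(u)|$. The factorial Grothendieck polynomial is $G_\mu(x_1,\dots,x_d\mid\mathbf y)=\sum_{T\in\operatorname{SSVT}_d(\mu)}\beta^{\operatorname{ne}(T)-|\mu|}\prod_{u\in\mu,\ r\in T(u)}(x_r\oplus y_{r+c(u)})$, with $c(u)=j-i$ for $u=(i,j)$. For $\ell(\lambda)\le d$, $\mathbf y_\lambda$ is the point whose $i$-th coordinate is $\ominus y_{\lambda_i+d-i+1}$, $i=1,\dots,d$.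 We write $\nu\mapsto\mu$ if $\mu\subseteq\nu$, $\nu\ne\mu$, and the cells of $\nu/\mu$ lie in pairwise distinct rows and pairwise distinct columns. *)

theory Defs
  imports Main
begin

definition is_partition :: "nat list \<Rightarrow> bool" where
  "is_partition la \<longleftrightarrow> sorted_wrt (\<ge>) la \<and> (\<forall>p\<in>set la. 0 < p)"

definition part :: "nat list \<Rightarrow> nat \<Rightarrow> nat" where
  "part la i = (if 1 \<le> i \<and> i \<le> length la then la ! (i - 1) else 0)"

text \<open>Young diagram, English convention: cell (i,j) = row i, column j, 1-indexed.\<close>
definition cells :: "nat list \<Rightarrow> (nat \<times> nat) set" where
  "cells la = {(i, j). 1 \<le> i \<and> i \<le> length la \<and> 1 \<le> j \<and> j \<le> part la i}"

definition psize :: "nat list \<Rightarrow> nat" where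
  "psize la = sum_list la"

definition goplus :: "'a::field \<Rightarrow> 'a \<Rightarrow> 'a \<Rightarrow> 'a" where
  "goplus \<beta> x y = x + y + \<beta> * x * y"

definition gominus :: "'a::field \<Rightarrow> 'a \<Rightarrow> 'a \<Rightarrow> 'a" where
  "gominus \<beta> x y = (x - y) / (1 + \<beta> * y)"

definition gneg :: "'a::field \<Rightarrow> 'a \<Rightarrow> 'a" where
  "gneg \<beta> x = gominus \<beta> 0 x"

definition SSVT :: "nat \<Rightarrow> nat list \<Rightarrow> (nat \<times> nat \<Rightarrow> nat set) set" where
  "SSVT d mu = {T. (\<forall>u. u \<notin> cells mu \<longrightarrow> T u = {})
     \<and> (\<forall>u\<in>cells mu. T u \<noteq> {} \<and> T u \<subseteq> {1..d})
     \<and> (\<forall>i j. (i, j) \<in> cells mu \<and> (i, j + 1) \<in> cells mu \<longrightarrow> Max (T (i, j)) \<le> Min (T (i, j + 1)))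
     \<and> (\<forall>i j. (i, j) \<in> cells mu \<and> (i + 1, j) \<in> cells mu \<longrightarrow> Max (T (i, j)) < Min (T (i + 1, j)))}"

definition ne :: "nat list \<Rightarrow> (nat \<times> nat \<Rightarrow> nat set) \<Rightarrow> nat" where
  "ne mu T = (\<Sum>u\<in>cells mu. card (T u))"

text \<open>Content c(u) = j - i; the index r + c(u) is always \<ge> 1 for tableaux (r \<ge> i).\<close>
definition content_idx :: "nat \<Rightarrow> nat \<times> nat \<Rightarrow> nat" where
  "content_idx r u = nat (int r + int (snd u) - int (fst u))"

definition G :: "'a::field \<Rightarrow> nat \<Rightarrow> nat list \<Rightarrow> (nat \<Rightarrow> 'a) \<Rightarrow> (nat \<Rightarrow> 'a) \<Rightarrow> 'a" where
  "G \<beta> d mu x y = (\<Sum>T\<in>SSVT d mu. \<beta> ^ (ne mu T - psize mu) *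
     (\<Prod>u\<in>cells mu. \<Prod>r\<in>T u. goplus \<beta> (x r) (y (content_idx r u))))"

definition ypt :: "'a::field \<Rightarrow> nat \<Rightarrow> (nat \<Rightarrow> 'a) \<Rightarrow> nat list \<Rightarrow> nat \<Rightarrow> 'a" where
  "ypt \<beta> d y la i = gneg \<beta> (y (part la i + d - i + 1))"

definition wt :: "'a::field \<Rightarrow> nat \<Rightarrow> (nat \<Rightarrow> 'a) \<Rightarrow> nat list \<Rightarrow> nat list \<Rightarrow> 'a" where
  "wt \<beta> d y la mu = (\<Prod>i=1..d. (1 + \<beta> * y (part mu i + d - i + 1)) / (1 + \<beta> * y (part la i + d - i + 1)))"

definition covers :: "nat list \<Rightarrow> nat list \<Rightarrow> bool" where
  "covers nu mu \<longleftrightarrow> is_partition nu \<and> cells mu \<subseteq> cells nu \<and> nu \<noteq> mu \<and>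
     (\<forall>u\<in>cells nu - cells mu. \<forall>v\<in>cells nu - cells mu. u \<noteq> v \<longrightarrow> fst u \<noteq> fst v \<and> snd u \<noteq> snd v)"

end

theory Submission
  imports Defs
begin

definition SSVTc :: "nat \<Rightarrow> (nat \<times> nat) set \<Rightarrow> (nat \<times> nat \<Rightarrow> nat set) set" where
  "SSVTc d D = {T. (\<forall>u. u \<notin> D \<longrightarrow> T u = {})
     \<and> (\<forall>u\<in>D. T u \<noteq> {} \<and> T u \<subseteq> {1..d})
     \<and> (\<forall>i j. (i, j) \<in> D \<and> (i, j + 1) \<in> D \<longrightarrow> Max (T (i, j)) \<le> Min (T (i, j + 1)))
     \<and> (\<forall>i j. (i, j) \<in> D \<and> (i + 1, j) \<in> D \<longrightarrow> Max (T (i, j)) < Min (T (i + 1, j)))}"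

definition hh :: "'a::field \<Rightarrow> (nat \<Rightarrow> 'a) \<Rightarrow> (nat \<Rightarrow> 'a) \<Rightarrow> nat \<Rightarrow> nat \<times> nat \<Rightarrow> 'a" where
  "hh \<beta> x y r u = goplus \<beta> (x r) (y (content_idx r u))"

definition wT :: "'a::field \<Rightarrow> (nat \<Rightarrow> 'a) \<Rightarrow> (nat \<Rightarrow> 'a) \<Rightarrow> (nat \<times> nat) set \<Rightarrow> (nat \<times> nat \<Rightarrow> nat set) \<Rightarrow> 'a" where
  "wT \<beta> x y D T = \<beta> ^ ((\<Sum>u\<in>D. card (T u)) - card D) * (\<Prod>u\<in>D. \<Prod>r\<in>T u. hh \<beta> x y r u)"

definition Gc :: "'a::field \<Rightarrow> nat \<Rightarrow> (nat \<times> nat) set \<Rightarrow> (nat \<Rightarrow> 'a) \<Rightarrow> (nat \<Rightarrow> 'a) \<Rightarrow> 'a" where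
  "Gc \<beta> d D x y = (\<Sum>T\<in>SSVTc d D. wT \<beta> x y D T)"

lemma finite_SSVTc: assumes "finite D" shows "finite (SSVTc d D)"
proof -
  have "SSVTc d D \<subseteq> {T. \<forall>u. (u \<in> D \<longrightarrow> T u \<in> Pow {1..d}) \<and> (u \<notin> D \<longrightarrow> T u = {})}"
    unfolding SSVTc_def by auto
  moreover have "finite {T. \<forall>u. (u \<in> D \<longrightarrow> T u \<in> Pow {1..d}) \<and> (u \<notin> D \<longrightarrow> T u = {})}"
    by (rule finite_set_of_finite_funs) (use assms in auto)
  ultimately show ?thesis by (rule finite_subset)
qed

definition validK :: "(nat \<times> nat) set \<Rightarrow> (nat \<times> nat) set \<Rightarrow> bool" where
  "validK D K \<longleftrightarrow> K \<subseteq> D \<and> (\<forall>i j. (i, j) \<in> D - K \<longrightarrow> (i, j + 1) \<notin> K)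
      \<and> (\<forall>i j. (i, j) \<in> D - K \<longrightarrow> (i + 1, j) \<notin> D)"

definition AK :: "(nat \<times> nat) set \<Rightarrow> (nat \<times> nat) set \<Rightarrow> (nat \<times> nat) set" where
  "AK D K = {(i, j). (i, j) \<in> K \<and> (i, j + 1) \<notin> K \<and> (i + 1, j) \<notin> D}"

definition glue :: "nat \<Rightarrow> (nat \<times> nat) set \<Rightarrow> (nat \<times> nat) set \<Rightarrow> (nat \<times> nat) set \<Rightarrow> (nat \<times> nat \<Rightarrow> nat set) \<Rightarrow> (nat \<times> nat \<Rightarrow> nat set)" where
  "glue d D K S T' = (\<lambda>u. if u \<in> K then (if u \<in> S then insert d (T' u) else T' u)
       else if u \<in> D then {d} else {})"

definition splitK :: "nat \<Rightarrow> (nat \<times> nat) set \<Rightarrow> (nat \<times> nat \<Rightarrow> nat set) \<Rightarrow> (nat \<times> nat) set" where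
  "splitK d D T = {u \<in> D. T u \<noteq> {d}}"

definition splitS :: "nat \<Rightarrow> (nat \<times> nat) set \<Rightarrow> (nat \<times> nat \<Rightarrow> nat set) \<Rightarrow> (nat \<times> nat) set" where
  "splitS d D T = {u \<in> D. T u \<noteq> {d} \<and> d \<in> T u}"

definition splitT :: "nat \<Rightarrow> (nat \<times> nat) set \<Rightarrow> (nat \<times> nat \<Rightarrow> nat set) \<Rightarrow> (nat \<times> nat \<Rightarrow> nat set)" where
  "splitT d D T = (\<lambda>u. if u \<in> D \<and> T u \<noteq> {d} then T u - {d} else {})"

lemma Max_le_Min_sub:
  fixes A B :: "nat set"
  assumes "finite A" "A \<noteq> {}" "A \<subseteq> {1..d}" "B \<subseteq> {1..d}" "finite B" "B \<noteq> {}" "Max A \<le> Min B" "d \<in> A"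
  shows "B = {d}"
proof -
  have "Max A \<ge> d" using assms by simp
  hence "\<forall>b\<in>B. b \<ge> d" using assms by (meson Min_le dual_order.trans)
  thus ?thesis using assms by fastforce
qed

lemma glue_in:
  assumes K: "validK D K" and S: "S \<subseteq> AK D K" and T': "T' \<in> SSVTc e K"
  shows "glue (Suc e) D K S T' \<in> SSVTc (Suc e) D"
proof -
  let ?d = "Suc e"
  let ?T = "glue ?d D K S T'"
  have KD: "K \<subseteq> D" using K by (simp add: validK_def)
  have T'1: "\<And>u. u \<notin> K \<Longrightarrow> T' u = {}" and T'2: "\<And>u. u \<in> K \<Longrightarrow> T' u \<noteq> {} \<and> T' u \<subseteq> {1..e}"
    and T'3: "\<And>i j. (i, j) \<in> K \<Longrightarrow> (i, j + 1) \<in> K \<Longrightarrow> Max (T' (i, j)) \<le> Min (T' (i, j + 1))"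
    and T'4: "\<And>i j. (i, j) \<in> K \<Longrightarrow> (i + 1, j) \<in> K \<Longrightarrow> Max (T' (i, j)) < Min (T' (i + 1, j))"
    using T' unfolding SSVTc_def by auto
  have fin: "\<And>u. finite (T' u)" using T'1 T'2 by (metis finite_atLeastAtMost finite.emptyI finite_subset)
  have MaxT': "\<And>u. u \<in> K \<Longrightarrow> Max (T' u) \<le> e" using T'2 fin
    by (meson Max_in atLeastAtMost_iff subset_iff)
  have MinT': "\<And>u. u \<in> K \<Longrightarrow> Min (T' u) \<le> e" using T'2 fin
    by (meson Min_in atLeastAtMost_iff subset_iff)
  have Minins: "\<And>u. u \<in> K \<Longrightarrow> Min (insert ?d (T' u)) = Min (T' u)"
  proof -
    fix u assume uK: "u \<in> K"
    have "Min (insert ?d (T' u)) = min ?d (Min (T' u))"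
      using Min_insert[OF fin[of u]] T'2[OF uK] by blast
    thus "Min (insert ?d (T' u)) = Min (T' u)" using MinT'[OF uK] by simp
  qed
  have MinT: "\<And>u. u \<in> K \<Longrightarrow> Min (?T u) = Min (T' u)"
    unfolding glue_def using Minins by auto
  show ?thesis
    unfolding SSVTc_def
  proof (intro CollectI conjI allI impI ballI)
    fix u assume "u \<notin> D" thus "?T u = {}" using KD unfolding glue_def by auto
  next
    fix u assume uD: "u \<in> D" 
    show "?T u \<noteq> {}" using T'2[of u] uD unfolding glue_def by auto
    show "?T u \<subseteq> {1..?d}"
    proof (cases "u \<in> K")
      case True
      hence "T' u \<subseteq> {1..?d}" using T'2[of u] by auto
      thus ?thesis using True unfolding glue_def by auto
    qed (use uD in \<open>auto simp: glue_def\<close>)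
  next
    fix i j assume a: "(i, j) \<in> D \<and> (i, j + 1) \<in> D"
    show "Max (?T (i, j)) \<le> Min (?T (i, j + 1))"
    proof (cases "(i, j) \<in> K")
      case True
      hence nS: "(i, j) \<notin> S \<or> (i, j + 1) \<notin> K" using S by (auto simp: AK_def)
      show ?thesis
      proof (cases "(i, j + 1) \<in> K")
        case True2: True
        with nS have "(i, j) \<notin> S" by simp
        hence "?T (i, j) = T' (i, j)" using True by (simp add: glue_def)
        thus ?thesis using MinT[OF True2] T'3[OF True True2] by simp
      next
        case False
        hence "?T (i, j + 1) = {?d}" using a by (simp add: glue_def)
        moreover have "Max (?T (i, j)) \<le> ?d"
          using T'2[OF True] fin[of "(i,j)"] True by (auto simp: glue_def)
        ultimately show ?thesis by simp
      qed
    next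
      case False
      hence "(i, j + 1) \<notin> K" using K a by (simp add: validK_def)
      thus ?thesis using False a by (simp add: glue_def)
    qed
  next
    fix i j assume a: "(i, j) \<in> D \<and> (i + 1, j) \<in> D"
    have iK: "(i, j) \<in> K" using K a by (auto simp: validK_def)
    have "(i, j) \<notin> S" using S a by (auto simp: AK_def)
    hence Tij: "?T (i, j) = T' (i, j)" using iK by (simp add: glue_def)
    show "Max (?T (i, j)) < Min (?T (i + 1, j))"
    proof (cases "(i + 1, j) \<in> K")
      case True
      thus ?thesis using Tij MinT T'4 iK by simp
    next
      case False
      hence "?T (i + 1, j) = {?d}" using a by (simp add: glue_def)
      thus ?thesis using Tij MaxT'[OF iK] by simp
    qed
  qed
qed

lemma SSVTc_props:
  assumes "T \<in> SSVTc d D"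
  shows "\<And>u. u \<notin> D \<Longrightarrow> T u = {}" "\<And>u. u \<in> D \<Longrightarrow> T u \<noteq> {}"
    "\<And>u. u \<in> D \<Longrightarrow> T u \<subseteq> {1..d}" "\<And>u. finite (T u)"
    "\<And>i j. (i, j) \<in> D \<Longrightarrow> (i, j + 1) \<in> D \<Longrightarrow> Max (T (i, j)) \<le> Min (T (i, j + 1))"
    "\<And>i j. (i, j) \<in> D \<Longrightarrow> (i + 1, j) \<in> D \<Longrightarrow> Max (T (i, j)) < Min (T (i + 1, j))"
  using assms unfolding SSVTc_def apply auto
  by (metis finite.emptyI finite_atLeastAtMost finite_subset)

lemma split_in:
  assumes T: "T \<in> SSVTc (Suc e) D"
  shows "validK D (splitK (Suc e) D T)" "splitS (Suc e) D T \<subseteq> AK D (splitK (Suc e) D T)"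
    "splitT (Suc e) D T \<in> SSVTc e (splitK (Suc e) D T)"
proof -
  let ?d = "Suc e"
  note P = SSVTc_props[OF T]
  have key: "\<And>i j. (i, j) \<in> D \<Longrightarrow> (i, j + 1) \<in> D \<Longrightarrow> ?d \<in> T (i, j) \<Longrightarrow> T (i, j + 1) = {?d}"
    using P by (intro Max_le_Min_sub[of "T (i,j)" ?d "T (i,j+1)" for i j]) auto
  have key2: "\<And>i j. (i, j) \<in> D \<Longrightarrow> (i + 1, j) \<in> D \<Longrightarrow> ?d \<notin> T (i, j)"
  proof
    fix i j assume a: "(i, j) \<in> D" "(i + 1, j) \<in> D" "?d \<in> T (i, j)"
    have "?d \<le> Max (T (i, j))" using a P(4) by simp
    also have "\<dots> < Min (T (i + 1, j))" using P(6) a by blast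
    also have "\<dots> \<le> ?d" using P(2,3,4)[of "(i+1,j)"] a
      by (meson Min_in atLeastAtMost_iff subset_iff)
    finally show False by simp
  qed
  show "validK D (splitK ?d D T)"
    unfolding validK_def splitK_def using key key2 by (auto, metis insertI1)
  show "splitS ?d D T \<subseteq> AK D (splitK ?d D T)"
    unfolding splitS_def AK_def splitK_def using key key2 by auto
  show "splitT ?d D T \<in> SSVTc e (splitK ?d D T)"
    unfolding SSVTc_def
  proof (intro CollectI conjI allI impI ballI)
    fix u assume "u \<notin> splitK ?d D T" thus "splitT ?d D T u = {}"
      by (auto simp: splitK_def splitT_def)
  next
    fix u assume u: "u \<in> splitK ?d D T"
    hence uD: "u \<in> D" and ne: "T u \<noteq> {?d}" by (auto simp: splitK_def)
    show "splitT ?d D T u \<noteq> {}" using u P(2)[OF uD] ne by (auto simp: splitT_def splitK_def)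
    show "splitT ?d D T u \<subseteq> {1..e}" using u P(3)[OF uD] by (auto simp: splitT_def splitK_def)
  next
    fix i j assume a: "(i, j) \<in> splitK ?d D T \<and> (i, j + 1) \<in> splitK ?d D T"
    let ?A = "T (i, j)" and ?B = "T (i, j + 1)"
    have D: "(i, j) \<in> D" "(i, j + 1) \<in> D" "?A \<noteq> {?d}" "?B \<noteq> {?d}" using a by (auto simp: splitK_def)
    have neA: "?A - {?d} \<noteq> {}" using P(2)[OF D(1)] D(3) by auto
    have neB: "?B - {?d} \<noteq> {}" using P(2)[OF D(2)] D(4) by auto
    have "Max (?A - {?d}) \<le> Max ?A" using neA P(4) by (intro Max_mono) auto
    also have "\<dots> \<le> Min ?B" using P(5) D by blast
    also have "\<dots> \<le> Min (?B - {?d})" using neB P(4) by (intro Min_antimono) auto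
    finally show "Max (splitT ?d D T (i, j)) \<le> Min (splitT ?d D T (i, j + 1))"
      using D by (simp add: splitT_def)
  next
    fix i j assume a: "(i, j) \<in> splitK ?d D T \<and> (i + 1, j) \<in> splitK ?d D T"
    let ?A = "T (i, j)" and ?B = "T (i + 1, j)"
    have D: "(i, j) \<in> D" "(i + 1, j) \<in> D" "?A \<noteq> {?d}" "?B \<noteq> {?d}" using a by (auto simp: splitK_def)
    have neA: "?A - {?d} \<noteq> {}" using P(2)[OF D(1)] D(3) by auto
    have neB: "?B - {?d} \<noteq> {}" using P(2)[OF D(2)] D(4) by auto
    have "Max (?A - {?d}) \<le> Max ?A" using neA P(4) by (intro Max_mono) auto
    also have "\<dots> < Min ?B" using P(6) D by blast
    also have "\<dots> \<le> Min (?B - {?d})" using neB P(4) by (intro Min_antimono) auto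
    finally show "Max (splitT ?d D T (i, j)) < Min (splitT ?d D T (i + 1, j))"
      using D by (simp add: splitT_def)
  qed
qed

lemma glue_split:
  assumes T: "T \<in> SSVTc (Suc e) D"
  shows "glue (Suc e) D (splitK (Suc e) D T) (splitS (Suc e) D T) (splitT (Suc e) D T) = T"
proof
  fix u
  note P = SSVTc_props[OF T]
  show "glue (Suc e) D (splitK (Suc e) D T) (splitS (Suc e) D T) (splitT (Suc e) D T) u = T u"
    using P(1)[of u] by (auto simp: glue_def splitK_def splitS_def splitT_def)
qed

lemma split_glue:
  assumes K: "validK D K" and S: "S \<subseteq> AK D K" and T': "T' \<in> SSVTc e K"
  shows "splitK (Suc e) D (glue (Suc e) D K S T') = K"
    "splitS (Suc e) D (glue (Suc e) D K S T') = S"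
    "splitT (Suc e) D (glue (Suc e) D K S T') = T'"
proof -
  note P = SSVTc_props[OF T']
  have KD: "K \<subseteq> D" using K by (simp add: validK_def)
  have SK: "S \<subseteq> K" using S by (auto simp: AK_def)
  have nd: "\<And>u. Suc e \<notin> T' u"
    by (metis P(1) P(3) atLeastAtMost_iff empty_iff lessI not_less subsetD)
  have neq: "\<And>u. u \<in> K \<Longrightarrow> T' u \<noteq> {Suc e} \<and> insert (Suc e) (T' u) \<noteq> {Suc e}"
    using nd P(2) by blast
  show "splitK (Suc e) D (glue (Suc e) D K S T') = K"
    using KD neq by (auto simp: splitK_def glue_def)
  show "splitS (Suc e) D (glue (Suc e) D K S T') = S"
    using KD SK neq nd by (auto simp: splitS_def glue_def)
  show "splitT (Suc e) D (glue (Suc e) D K S T') = T'"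
  proof
    fix u show "splitT (Suc e) D (glue (Suc e) D K S T') u = T' u"
      using KD SK neq nd P(1)[of u] by (auto simp: splitT_def glue_def)
  qed
qed

lemma wT_glue:
  assumes D: "finite D" and K: "validK D K" and S: "S \<subseteq> AK D K" and T': "T' \<in> SSVTc e K"
  shows "wT \<beta> x y D (glue (Suc e) D K S T') =
     wT \<beta> x y K T' * (\<beta> ^ card S * (\<Prod>u\<in>S. hh \<beta> x y (Suc e) u)) * (\<Prod>u\<in>D - K. hh \<beta> x y (Suc e) u)"
proof -
  let ?d = "Suc e" and ?T = "glue (Suc e) D K S T'"
  note P = SSVTc_props[OF T']
  have KD: "K \<subseteq> D" using K by (simp add: validK_def)
  have SK: "S \<subseteq> K" using S by (auto simp: AK_def)
  have fK: "finite K" using KD D finite_subset by blast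
  have fS: "finite S" using SK fK finite_subset by blast
  have nd: "\<And>u. ?d \<notin> T' u"
    by (metis P(1) P(3) atLeastAtMost_iff empty_iff lessI not_less subsetD)
  have TK: "\<And>u. u \<in> K \<Longrightarrow> ?T u = (if u \<in> S then insert ?d (T' u) else T' u)"
    by (simp add: glue_def)
  have TDK: "\<And>u. u \<in> D - K \<Longrightarrow> ?T u = {?d}" by (simp add: glue_def)
  have c1: "(\<Sum>u\<in>D. card (?T u)) = (\<Sum>u\<in>K. card (T' u)) + card S + card (D - K)"
  proof -
    have "(\<Sum>u\<in>D. card (?T u)) = (\<Sum>u\<in>D - K. card (?T u)) + (\<Sum>u\<in>K. card (?T u))"
      using sum.subset_diff[OF KD D] by simp
    also have "(\<Sum>u\<in>D - K. card (?T u)) = card (D - K)" using TDK by simp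
    also have "(\<Sum>u\<in>K. card (?T u)) = (\<Sum>u\<in>K. card (T' u) + (if u \<in> S then 1 else 0))"
      using TK P(4) nd by (intro sum.cong) auto
    also have "\<dots> = (\<Sum>u\<in>K. card (T' u)) + card S"
      using fK SK by (simp add: sum.distrib sum.If_cases Int_absorb1)
    finally show ?thesis by simp
  qed
  have c2: "card D = card K + card (D - K)"
    using KD fK D by (metis card_Diff_subset card_mono le_add_diff_inverse)
  have c3: "card K \<le> (\<Sum>u\<in>K. card (T' u))"
  proof -
    have "(\<Sum>u\<in>K. (1::nat)) \<le> (\<Sum>u\<in>K. card (T' u))"
      using P(2) P(4) by (intro sum_mono) (simp add: Suc_le_eq card_gt_0_iff)
    thus ?thesis by simp
  qed
  have ex: "(\<Sum>u\<in>D. card (?T u)) - card D = ((\<Sum>u\<in>K. card (T' u)) - card K) + card S"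
    using c1 c2 c3 by simp
  have pr: "(\<Prod>u\<in>D. \<Prod>r\<in>?T u. hh \<beta> x y r u) =
      (\<Prod>u\<in>K. \<Prod>r\<in>T' u. hh \<beta> x y r u) * (\<Prod>u\<in>S. hh \<beta> x y ?d u) * (\<Prod>u\<in>D - K. hh \<beta> x y ?d u)"
  proof -
    have "(\<Prod>u\<in>D. \<Prod>r\<in>?T u. hh \<beta> x y r u) = (\<Prod>u\<in>D - K. \<Prod>r\<in>?T u. hh \<beta> x y r u) * (\<Prod>u\<in>K. \<Prod>r\<in>?T u. hh \<beta> x y r u)"
      using prod.subset_diff[OF KD D] by simp
    also have "(\<Prod>u\<in>D - K. \<Prod>r\<in>?T u. hh \<beta> x y r u) = (\<Prod>u\<in>D - K. hh \<beta> x y ?d u)"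
      using TDK by simp
    also have "(\<Prod>u\<in>K. \<Prod>r\<in>?T u. hh \<beta> x y r u) = (\<Prod>u\<in>K. (if u \<in> S then hh \<beta> x y ?d u else 1) * (\<Prod>r\<in>T' u. hh \<beta> x y r u))"
      using TK P(4) nd by (intro prod.cong) auto
    also have "\<dots> = (\<Prod>u\<in>K. (if u \<in> S then hh \<beta> x y ?d u else 1)) * (\<Prod>u\<in>K. \<Prod>r\<in>T' u. hh \<beta> x y r u)"
      by (simp add: prod.distrib)
    also have "(\<Prod>u\<in>K. (if u \<in> S then hh \<beta> x y ?d u else 1)) = (\<Prod>u\<in>S. hh \<beta> x y ?d u)"
      using prod.inter_restrict[OF fK, of "\<lambda>u. hh \<beta> x y ?d u" S] SK by (simp add: Int_absorb1)
    finally show ?thesis by (simp add: ac_simps)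
  qed
  show ?thesis unfolding wT_def ex pr by (simp add: power_add ac_simps)
qed

lemma sum_pow_prod:
  fixes f :: "'b \<Rightarrow> 'a::field"
  assumes "finite A"
  shows "(\<Sum>S\<in>Pow A. \<beta> ^ card S * (\<Prod>u\<in>S. f u)) = (\<Prod>u\<in>A. 1 + \<beta> * f u)"
proof -
  have "(\<Prod>u\<in>A. \<beta> * f u + 1) = (\<Sum>X\<in>Pow A. (\<Prod>u\<in>X. \<beta> * f u) * (\<Prod>u\<in>A - X. 1))"
    by (rule prod_add[OF assms])
  also have "\<dots> = (\<Sum>S\<in>Pow A. \<beta> ^ card S * (\<Prod>u\<in>S. f u))"
    by (intro sum.cong) (simp_all add: prod.distrib)
  finally show ?thesis by (simp add: add.commute)
qed

lemma branching_set:
  assumes D: "finite D"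
  shows "Gc \<beta> (Suc e) D x y = (\<Sum>K\<in>{K\<in>Pow D. validK D K}. Gc \<beta> e K x y *
      (\<Prod>u\<in>AK D K. 1 + \<beta> * hh \<beta> x y (Suc e) u) * (\<Prod>u\<in>D - K. hh \<beta> x y (Suc e) u))"
proof -
  let ?d = "Suc e"
  let ?V = "{K\<in>Pow D. validK D K}"
  let ?Sig = "Sigma ?V (\<lambda>K. Sigma (Pow (AK D K)) (\<lambda>S. SSVTc e K))"
  let ?g = "\<lambda>p. glue ?d D (fst p) (fst (snd p)) (snd (snd p))"
  let ?s = "\<lambda>T. (splitK ?d D T, splitS ?d D T, splitT ?d D T)"
  have fV: "finite ?V" using D by simp
  have fK: "\<And>K. K \<in> ?V \<Longrightarrow> finite K" using D finite_subset by auto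
  have fA: "\<And>K. K \<in> ?V \<Longrightarrow> finite (AK D K)"
    using fK by (rule finite_subset[rotated]) (auto simp: AK_def)
  have bij: "bij_betw ?g ?Sig (SSVTc ?d D)"
  proof (rule bij_betw_byWitness[where f' = ?s])
    show "\<forall>a\<in>?Sig. ?s (?g a) = a" using split_glue by auto
    show "\<forall>a'\<in>SSVTc ?d D. ?g (?s a') = a'" using glue_split by auto
    show "?g ` ?Sig \<subseteq> SSVTc ?d D" using glue_in by auto
    show "?s ` SSVTc ?d D \<subseteq> ?Sig"
    proof
      fix p assume "p \<in> ?s ` SSVTc ?d D"
      then obtain T where T: "T \<in> SSVTc ?d D" and p: "p = ?s T" by blast
      note sp = split_in[OF T]
      have "splitK ?d D T \<in> ?V" using sp(1) by (auto simp: validK_def)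
      thus "p \<in> ?Sig" using sp p by auto
    qed
  qed
  have "Gc \<beta> ?d D x y = (\<Sum>p\<in>?Sig. wT \<beta> x y D (?g p))"
    unfolding Gc_def using sum.reindex_bij_betw[OF bij, of "wT \<beta> x y D"] by simp
  also have "\<dots> = (\<Sum>K\<in>?V. \<Sum>S\<in>Pow (AK D K). \<Sum>T'\<in>SSVTc e K. wT \<beta> x y D (glue ?d D K S T'))"
  proof -
    have "(\<Sum>p\<in>?Sig. wT \<beta> x y D (?g p)) = (\<Sum>K\<in>?V. \<Sum>q\<in>Pow (AK D K) \<times> SSVTc e K. wT \<beta> x y D (?g (K, q)))"
      using sum.Sigma[OF fV, of "\<lambda>K. Pow (AK D K) \<times> SSVTc e K" "\<lambda>K q. wT \<beta> x y D (?g (K, q))"]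
        fA fK finite_SSVTc by (simp add: split_beta)
    also have "\<dots> = (\<Sum>K\<in>?V. \<Sum>S\<in>Pow (AK D K). \<Sum>T'\<in>SSVTc e K. wT \<beta> x y D (glue ?d D K S T'))"
    proof (intro sum.cong refl)
      fix K assume "K \<in> ?V"
      thus "(\<Sum>q\<in>Pow (AK D K) \<times> SSVTc e K. wT \<beta> x y D (?g (K, q))) = (\<Sum>S\<in>Pow (AK D K). \<Sum>T'\<in>SSVTc e K. wT \<beta> x y D (glue ?d D K S T'))"
        using sum.cartesian_product[of "\<lambda>S T'. wT \<beta> x y D (glue ?d D K S T')" "SSVTc e K" "Pow (AK D K)"]
        by (simp add: split_beta)
    qed
    finally show ?thesis .
  qed
  also have "\<dots> = (\<Sum>K\<in>?V. \<Sum>S\<in>Pow (AK D K). \<Sum>T'\<in>SSVTc e K.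
       wT \<beta> x y K T' * (\<beta> ^ card S * (\<Prod>u\<in>S. hh \<beta> x y ?d u)) * (\<Prod>u\<in>D - K. hh \<beta> x y ?d u))"
    using wT_glue[OF D] by (intro sum.cong refl) auto
  also have "\<dots> = (\<Sum>K\<in>?V. Gc \<beta> e K x y * (\<Sum>S\<in>Pow (AK D K). \<beta> ^ card S * (\<Prod>u\<in>S. hh \<beta> x y ?d u)) * (\<Prod>u\<in>D - K. hh \<beta> x y ?d u))"
    unfolding Gc_def by (simp add: sum_distrib_left sum_distrib_right ac_simps)
  also have "\<dots> = (\<Sum>K\<in>?V. Gc \<beta> e K x y * (\<Prod>u\<in>AK D K. 1 + \<beta> * hh \<beta> x y ?d u) * (\<Prod>u\<in>D - K. hh \<beta> x y ?d u))"
    using fA by (intro sum.cong refl) (simp add: sum_pow_prod)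
  finally show ?thesis .
qed

definition cellsf :: "(nat \<Rightarrow> nat) \<Rightarrow> (nat \<times> nat) set" where
  "cellsf m = {(i, j). 1 \<le> i \<and> 1 \<le> j \<and> j \<le> m i}"

definition ispf :: "(nat \<Rightarrow> nat) \<Rightarrow> bool" where
  "ispf m \<longleftrightarrow> m 0 = 0 \<and> (\<forall>i j. 1 \<le> i \<longrightarrow> i \<le> j \<longrightarrow> m j \<le> m i) \<and> (\<exists>L. \<forall>i>L. m i = 0)"

definition interlace :: "(nat \<Rightarrow> nat) \<Rightarrow> (nat \<Rightarrow> nat) \<Rightarrow> bool" where
  "interlace m k \<longleftrightarrow> k 0 = 0 \<and> (\<forall>i\<ge>1. m (Suc i) \<le> k i \<and> k i \<le> m i)"

lemma finite_bounded_funs: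
  assumes "\<forall>i>L. b i = 0"
  shows "finite {k::nat\<Rightarrow>nat. \<forall>i. k i \<le> b i}"
proof -
  have "{k::nat\<Rightarrow>nat. \<forall>i. k i \<le> b i} \<subseteq> {k. \<forall>i. (i \<in> {..L} \<longrightarrow> k i \<in> {0..Max (b ` {..L})}) \<and> (i \<notin> {..L} \<longrightarrow> k i = 0)}"
  proof (rule subsetI, unfold mem_Collect_eq, intro allI conjI impI)
    fix k :: "nat \<Rightarrow> nat" and i assume k: "\<forall>i. k i \<le> b i"
    { assume "i \<in> {..L}"
      hence "b i \<le> Max (b ` {..L})" by simp
      thus "k i \<in> {0..Max (b ` {..L})}" using k[rule_format, of i] by simp }
    { assume "i \<notin> {..L}" thus "k i = 0" using k[rule_format, of i] assms by simp }
  qed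
  moreover have "finite {k. \<forall>i. (i \<in> {..L} \<longrightarrow> k i \<in> {0..Max (b ` {..L})}) \<and> (i \<notin> {..L} \<longrightarrow> k i = (0::nat))}"
    by (rule finite_set_of_finite_funs) auto
  ultimately show ?thesis by (rule finite_subset)
qed

lemma finite_cellsf:
  assumes "\<forall>i>L. m i = 0" shows "finite (cellsf m)"
proof -
  have "cellsf m \<subseteq> {1..L} \<times> {1..Max (m ` {..L})}"
  proof
    fix u assume "u \<in> cellsf m"
    then obtain i j where u: "u = (i, j)" "1 \<le> i" "1 \<le> j" "j \<le> m i" by (auto simp: cellsf_def)
    have iL: "i \<le> L" using u assms by (metis le_zero_eq not_le not_one_le_zero)
    hence "m i \<le> Max (m ` {..L})" by simp
    hence "j \<le> Max (m ` {..L})" using u(4) by linarith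
    thus "u \<in> {1..L} \<times> {1..Max (m ` {..L})}" using u iL by auto
  qed
  thus ?thesis by (rule finite_subset) simp
qed

lemma finite_interlace:
  assumes "\<forall>i>L. m i = 0" shows "finite {k. interlace m k}"
proof -
  have "{k. interlace m k} \<subseteq> {k. \<forall>i. k i \<le> m i}"
  proof (rule subsetI, unfold mem_Collect_eq, intro allI)
    fix k i assume "interlace m k" thus "k i \<le> m i"
      by (cases "i = 0") (auto simp: interlace_def)
  qed
  thus ?thesis using finite_bounded_funs[OF assms] finite_subset by blast
qed

lemma cellsf_inj:
  assumes "k1 0 = 0" "k2 0 = 0" "cellsf k1 = cellsf k2" shows "k1 = k2"
proof
  fix i show "k1 i = k2 i"
  proof (cases "i = 0")
    case True thus ?thesis using assms by simp
  next
    case False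
    show ?thesis
    proof (rule ccontr)
      assume ne: "k1 i \<noteq> k2 i"
      show False
      proof (cases "k1 i < k2 i")
        case True
        hence "(i, k2 i) \<in> cellsf k2" "(i, k2 i) \<notin> cellsf k1" using False by (auto simp: cellsf_def)
        thus False using assms by simp
      next
        case False2: False
        hence "(i, k1 i) \<in> cellsf k1" "(i, k1 i) \<notin> cellsf k2" using False ne by (auto simp: cellsf_def)
        thus False using assms by simp
      qed
    qed
  qed
qed

lemma prefix_card:
  fixes J :: "nat set"
  assumes "finite J" "0 \<notin> J" "\<And>j j'. j \<in> J \<Longrightarrow> 1 \<le> j' \<Longrightarrow> j' \<le> j \<Longrightarrow> j' \<in> J"
  shows "J = {1..card J}"
proof (cases "J = {}")
  case True thus ?thesis by simp
next
  case False
  have "J = {1..Max J}"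
  proof
    show "J \<subseteq> {1..Max J}" using assms(1,2) by (auto simp: Suc_le_eq intro!: Max_ge) (metis gr0I)
    show "{1..Max J} \<subseteq> J" using assms(3)[of "Max J"] Max_in[OF assms(1) False] by auto
  qed
  moreover hence "card J = Max J" by (metis card_atLeastAtMost diff_Suc_1)
  ultimately show ?thesis by simp
qed

lemma valid_is_cellsf:
  assumes m: "ispf m" and K: "validK (cellsf m) K"
  defines "k \<equiv> \<lambda>i. if i = 0 then 0 else card {j. (i, j) \<in> K}"
  shows "K = cellsf k" "interlace m k"
proof -
  obtain L where L: "\<forall>i>L. m i = 0" using m by (auto simp: ispf_def)
  have mono: "\<And>i j. 1 \<le> i \<Longrightarrow> i \<le> j \<Longrightarrow> m j \<le> m i" using m by (auto simp: ispf_def)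
  have KD: "K \<subseteq> cellsf m" using K by (simp add: validK_def)
  have V1: "\<And>i j. (i, j) \<in> cellsf m \<Longrightarrow> (i, j) \<notin> K \<Longrightarrow> (i, j + 1) \<notin> K"
   and V2: "\<And>i j. (i, j) \<in> cellsf m \<Longrightarrow> (i, j) \<notin> K \<Longrightarrow> (i + 1, j) \<notin> cellsf m"
    using K by (auto simp: validK_def)
  have out: "\<And>i j t. (i, j) \<notin> K \<Longrightarrow> 1 \<le> j \<Longrightarrow> (i, j + t) \<notin> K"
  proof -
    fix i j t assume a: "(i, j) \<notin> K" "1 \<le> j"
    show "(i, j + t) \<notin> K"
    proof (induction t)
      case 0 thus ?case using a by simp
    next
      case (Suc t)
      show ?case
      proof (cases "(i, j + t) \<in> cellsf m")
        case True thus ?thesis using V1 Suc by simp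
      next
        case False
        hence "(i, j + Suc t) \<notin> cellsf m" using a by (auto simp: cellsf_def)
        thus ?thesis using KD by auto
      qed
    qed
  qed
  have rowJ: "\<And>i. 1 \<le> i \<Longrightarrow> {j. (i, j) \<in> K} = {1..k i}"
  proof -
    fix i :: nat assume i: "1 \<le> i"
    have fin: "finite {j. (i, j) \<in> K}"
    proof (rule finite_subset)
      show "{j. (i, j) \<in> K} \<subseteq> {1..m i}" using KD by (auto simp: cellsf_def)
    qed simp
    have "{j. (i, j) \<in> K} = {1..card {j. (i, j) \<in> K}}"
    proof (rule prefix_card[OF fin])
      show "0 \<notin> {j. (i, j) \<in> K}" using KD by (auto simp: cellsf_def)
      fix j j' assume "j \<in> {j. (i, j) \<in> K}" "1 \<le> j'" "j' \<le> j"
      thus "j' \<in> {j. (i, j) \<in> K}" using out[of i j' "j - j'"] by auto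
    qed
    thus "{j. (i, j) \<in> K} = {1..k i}" using i by (simp add: k_def)
  qed
  show Kc: "K = cellsf k"
  proof
    show "K \<subseteq> cellsf k"
    proof
      fix u assume u: "u \<in> K"
      have "u \<in> cellsf m" using KD u by blast
      then obtain i j where ij: "u = (i, j)" "1 \<le> i" by (auto simp: cellsf_def)
      hence "j \<in> {j. (i, j) \<in> K}" using u by simp
      thus "u \<in> cellsf k" using rowJ[OF ij(2)] ij by (auto simp: cellsf_def)
    qed
    show "cellsf k \<subseteq> K"
    proof
      fix u assume "u \<in> cellsf k"
      then obtain i j where ij: "u = (i, j)" "1 \<le> i" "1 \<le> j" "j \<le> k i" by (auto simp: cellsf_def)
      hence "j \<in> {j. (i, j) \<in> K}" using rowJ[OF ij(2)] by simp
      thus "u \<in> K" using ij by simp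
    qed
  qed
  show "interlace m k"
    unfolding interlace_def
  proof (intro conjI allI impI)
    show "k 0 = 0" by (simp add: k_def)
    fix i :: nat assume i: "1 \<le> i"
    show "k i \<le> m i"
    proof (cases "k i = 0")
      case False
      hence "(i, k i) \<in> K" using rowJ[OF i] by (metis atLeastAtMost_iff le_refl less_one mem_Collect_eq not_le)
      thus ?thesis using KD by (auto simp: cellsf_def)
    qed simp
    show "m (Suc i) \<le> k i"
    proof (cases "m (Suc i) = 0")
      case False
      have "(Suc i, m (Suc i)) \<in> cellsf m" using False by (auto simp: cellsf_def)
      moreover have "(i, m (Suc i)) \<in> cellsf m" using False mono[of i "Suc i"] i by (auto simp: cellsf_def)
      ultimately have "(i, m (Suc i)) \<in> K" using V2 by fastforce
      thus ?thesis using rowJ[OF i] by auto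
    qed simp
  qed
qed

lemma interlace_valid:
  assumes "interlace m k" shows "validK (cellsf m) (cellsf k)"
  using assms unfolding interlace_def validK_def cellsf_def
  by (auto simp: not_le)

lemma branching_fun0:
  assumes m: "ispf m"
  shows "Gc \<beta> (Suc e) (cellsf m) x y = (\<Sum>k\<in>{k. interlace m k}. Gc \<beta> e (cellsf k) x y *
      (\<Prod>u\<in>AK (cellsf m) (cellsf k). 1 + \<beta> * hh \<beta> x y (Suc e) u) * (\<Prod>u\<in>cellsf m - cellsf k. hh \<beta> x y (Suc e) u))"
proof -
  obtain L where L: "\<forall>i>L. m i = 0" using m by (auto simp: ispf_def)
  have bij: "bij_betw cellsf {k. interlace m k} {K\<in>Pow (cellsf m). validK (cellsf m) K}"
  proof (rule bij_betw_imageI)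
    show "inj_on cellsf {k. interlace m k}"
      by (rule inj_onI) (auto simp: interlace_def intro: cellsf_inj)
    show "cellsf ` {k. interlace m k} = {K \<in> Pow (cellsf m). validK (cellsf m) K}"
    proof
      show "cellsf ` {k. interlace m k} \<subseteq> {K \<in> Pow (cellsf m). validK (cellsf m) K}"
        using interlace_valid unfolding validK_def by blast
      show "{K \<in> Pow (cellsf m). validK (cellsf m) K} \<subseteq> cellsf ` {k. interlace m k}"
        using valid_is_cellsf[OF m] by blast
    qed
  qed
  show ?thesis
    unfolding branching_set[OF finite_cellsf[OF L]]
    using sum.reindex_bij_betw[OF bij, of "\<lambda>K. Gc \<beta> e K x y *
      (\<Prod>u\<in>AK (cellsf m) K. 1 + \<beta> * hh \<beta> x y (Suc e) u) * (\<Prod>u\<in>cellsf m - K. hh \<beta> x y (Suc e) u)"]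
    by simp
qed

definition wrow :: "'a::field \<Rightarrow> (nat \<Rightarrow> 'a) \<Rightarrow> (nat \<Rightarrow> 'a) \<Rightarrow> nat \<Rightarrow> nat \<Rightarrow> nat \<Rightarrow> nat \<Rightarrow> nat \<Rightarrow> 'a" where
  "wrow \<beta> x y r i n k n' = (\<Prod>a\<in>{k<..n}. hh \<beta> x y r (i, a)) * (if n' < k then 1 + \<beta> * hh \<beta> x y r (i, k) else 1)"

lemma branching_fun:
  assumes m: "ispf m" and md: "\<forall>i>d. m i = 0" and d: "d = Suc e"
  shows "Gc \<beta> d (cellsf m) x y = (\<Sum>k\<in>{k. interlace m k}. Gc \<beta> e (cellsf k) x y *
     (\<Prod>i\<in>{1..d}. wrow \<beta> x y d i (m i) (k i) (m (Suc i))))"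
  unfolding d branching_fun0[OF m]
proof (intro sum.cong refl)
  fix k assume "k \<in> {k. interlace m k}"
  hence il: "interlace m k" by simp
  have kle: "\<And>i. k i \<le> m i"
  proof -
    fix i show "k i \<le> m i" by (cases "i = 0") (use il in \<open>auto simp: interlace_def\<close>)
  qed
  let ?h = "hh \<beta> x y (Suc e)"
  have A: "AK (cellsf m) (cellsf k) = (\<lambda>i. (i, k i)) ` {i\<in>{1..Suc e}. m (Suc i) < k i}"
  proof (rule set_eqI, rule iffI)
    fix u assume u: "u \<in> AK (cellsf m) (cellsf k)"
    then obtain i j where ij: "u = (i, j)" "1 \<le> i" "1 \<le> j" "j \<le> k i" "\<not> j + 1 \<le> k i" "\<not> (j \<le> m (Suc i))"
      by (auto simp: AK_def cellsf_def)
    have "j = k i" using ij by simp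
    moreover have "i \<le> Suc e"
    proof (rule ccontr)
      assume "\<not> i \<le> Suc e" hence "m i = 0" using md d by simp
      thus False using kle[of i] ij by simp
    qed
    ultimately show "u \<in> (\<lambda>i. (i, k i)) ` {i\<in>{1..Suc e}. m (Suc i) < k i}" using ij by auto
  next
    fix u assume "u \<in> (\<lambda>i. (i, k i)) ` {i\<in>{1..Suc e}. m (Suc i) < k i}"
    then obtain i where i: "u = (i, k i)" "1 \<le> i" "i \<le> Suc e" "m (Suc i) < k i" by auto
    thus "u \<in> AK (cellsf m) (cellsf k)" by (auto simp: AK_def cellsf_def)
  qed
  have B: "cellsf m - cellsf k = Sigma {1..Suc e} (\<lambda>i. {k i<..m i})"
  proof (rule set_eqI, rule iffI)
    fix u assume u: "u \<in> cellsf m - cellsf k"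
    then obtain i j where ij0: "u = (i, j)" "1 \<le> i" "1 \<le> j" "j \<le> m i" "\<not> j \<le> k i"
      by (auto simp: cellsf_def)
    hence ij: "u = (i, j)" "1 \<le> i" "1 \<le> j" "j \<le> m i" "k i < j" by auto
    have "i \<le> Suc e"
    proof (rule ccontr)
      assume "\<not> i \<le> Suc e" hence "m i = 0" using md d by simp
      thus False using ij by simp
    qed
    thus "u \<in> Sigma {1..Suc e} (\<lambda>i. {k i<..m i})" using ij by auto
  next
    fix u assume "u \<in> Sigma {1..Suc e} (\<lambda>i. {k i<..m i})"
    thus "u \<in> cellsf m - cellsf k" by (auto simp: cellsf_def)
  qed
  have PA: "(\<Prod>u\<in>AK (cellsf m) (cellsf k). 1 + \<beta> * ?h u) =
      (\<Prod>i\<in>{1..Suc e}. if m (Suc i) < k i then 1 + \<beta> * ?h (i, k i) else 1)"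
  proof -
    have "(\<Prod>u\<in>AK (cellsf m) (cellsf k). 1 + \<beta> * ?h u) = (\<Prod>i\<in>{i\<in>{1..Suc e}. m (Suc i) < k i}. 1 + \<beta> * ?h (i, k i))"
      unfolding A by (subst prod.reindex) (auto simp: inj_on_def)
    also have "\<dots> = (\<Prod>i\<in>{1..Suc e}. if m (Suc i) < k i then 1 + \<beta> * ?h (i, k i) else 1)"
      by (rule prod.inter_filter) simp
    finally show ?thesis .
  qed
  have PB: "(\<Prod>u\<in>cellsf m - cellsf k. ?h u) = (\<Prod>i\<in>{1..Suc e}. \<Prod>a\<in>{k i<..m i}. ?h (i, a))"
    unfolding B by (subst prod.Sigma) auto
  show "Gc \<beta> e (cellsf k) x y * (\<Prod>u\<in>AK (cellsf m) (cellsf k). 1 + \<beta> * ?h u) * (\<Prod>u\<in>cellsf m - cellsf k. ?h u) =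
      Gc \<beta> e (cellsf k) x y * (\<Prod>i\<in>{1..Suc e}. wrow \<beta> x y (Suc e) i (m i) (k i) (m (Suc i)))"
    unfolding PA PB wrow_def by (simp add: prod.distrib ac_simps)
qed

lemma ispf_mono: "ispf m \<Longrightarrow> 1 \<le> i \<Longrightarrow> i \<le> j \<Longrightarrow> m j \<le> m i"
  by (auto simp: ispf_def)

lemma Gc_vanish:
  assumes r: "ispf r" and i: "e < i" and ri: "r i \<noteq> 0"
  shows "Gc \<beta> e (cellsf r) x y = 0"
proof -
  have "SSVTc e (cellsf r) = {}"
  proof (rule ccontr)
    assume "SSVTc e (cellsf r) \<noteq> {}"
    then obtain T where T: "T \<in> SSVTc e (cellsf r)" by blast
    note P = SSVTc_props[OF T]
    have inC: "\<And>i'. 1 \<le> i' \<Longrightarrow> i' \<le> i \<Longrightarrow> (i', 1) \<in> cellsf r"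
    proof -
      fix i' :: nat assume a: "1 \<le> i'" "i' \<le> i"
      have "r i \<le> r i'" using ispf_mono[OF r a] .
      thus "(i', 1) \<in> cellsf r" using ri a by (auto simp: cellsf_def)
    qed
    have claim: "\<And>t. Suc t \<le> i \<Longrightarrow> Suc t \<le> Min (T (Suc t, 1))"
    proof -
      fix t show "Suc t \<le> i \<Longrightarrow> Suc t \<le> Min (T (Suc t, 1))"
      proof (induction t)
        case 0
        have "(1, 1) \<in> cellsf r" using inC 0 by simp
        thus ?case using P(2,3,4)[of "(1,1)"] by (auto intro!: Min_in)
      next
        case (Suc t)
        have c1: "(Suc t, 1) \<in> cellsf r" using inC Suc.prems by simp
        have c2: "(Suc t + 1, 1) \<in> cellsf r" using inC Suc.prems by simp
        have "Suc t \<le> Min (T (Suc t, 1))" using Suc by simp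
        also have "\<dots> \<le> Max (T (Suc t, 1))" using P(2,4)[of "(Suc t, 1)"] c1 by (meson Max_in Min_le)
        also have "\<dots> < Min (T (Suc t + 1, 1))" using P(6)[OF c1 c2] .
        finally show ?case by simp
      qed
    qed
    have ip: "1 \<le> i" using i by simp
    have "i \<le> Min (T (i, 1))" using claim[of "i - 1"] ip by simp
    moreover have "Min (T (i, 1)) \<le> e" using P(2,3,4)[of "(i,1)"] inC[OF ip le_refl]
      by (meson Min_in atLeastAtMost_iff subsetD)
    ultimately show False using i by simp
  qed
  thus ?thesis by (simp add: Gc_def)
qed

lemma Gc_zero: "Gc \<beta> 0 D x y = (if D = {} then 1 else 0)"
proof (cases "D = {}")
  case True
  have "SSVTc 0 D = {\<lambda>_. {}}" using True by (auto simp: SSVTc_def)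
  thus ?thesis using True by (simp add: Gc_def wT_def)
next
  case False
  have "SSVTc 0 D = {}" using False by (auto simp: SSVTc_def)
  thus ?thesis using False by (simp add: Gc_def)
qed

definition Mr :: "'a::field \<Rightarrow> 'a \<Rightarrow> (nat \<Rightarrow> 'a) \<Rightarrow> (nat \<Rightarrow> 'a) \<Rightarrow> nat \<Rightarrow> nat \<Rightarrow> nat \<Rightarrow> bool \<Rightarrow> bool \<Rightarrow> 'a" where
  "Mr \<beta> Q z Y m m' r t t' =
    (if t' \<and> \<not> m' < m then 0 else
     if m' + (if t' then 1 else 0) \<le> r \<and> r \<le> m + (if t then 1 else 0)
     then (if t then \<beta> else 1) * (\<Prod>a\<in>{r<..m + (if t then 1 else 0)}. z a) *
          (if m' + (if t' then 1 else 0) < r then 1 + \<beta> * z r else 1)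
     else 0)"

definition tau :: "'a::field \<Rightarrow> 'a \<Rightarrow> (nat \<Rightarrow> 'a) \<Rightarrow> (nat \<Rightarrow> 'a) \<Rightarrow> nat \<Rightarrow> nat \<Rightarrow> nat \<Rightarrow> 'a" where
  "tau \<beta> Q z Y m m' k = (if m' \<le> k \<and> k \<le> m then (\<Prod>a\<in>{k<..m}. z a) * (if m' < k then Q * Y m' else 1) else 0)"

definition sig :: "'a::field \<Rightarrow> 'a \<Rightarrow> (nat \<Rightarrow> 'a) \<Rightarrow> (nat \<Rightarrow> 'a) \<Rightarrow> nat \<Rightarrow> nat \<Rightarrow> nat \<Rightarrow> nat \<Rightarrow> 'a" where
  "sig \<beta> Q z Y m m' r r' = tau \<beta> Q z Y m m' r + (if r' < r then \<beta> * tau \<beta> Q z Y m m' (r - 1) else 0)"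

definition Vr :: "'a::field \<Rightarrow> 'a \<Rightarrow> (nat \<Rightarrow> 'a) \<Rightarrow> (nat \<Rightarrow> 'a) \<Rightarrow> nat \<Rightarrow> nat \<Rightarrow> bool \<Rightarrow> 'a" where
  "Vr \<beta> Q z Y m r t = (if t then (if r \<le> m then \<beta> * z (Suc m) else if r = Suc m then Q * Y (Suc m) else 0)
      else (if r \<le> m then 1 else 0))"

definition Vn :: "'a::field \<Rightarrow> 'a \<Rightarrow> (nat \<Rightarrow> 'a) \<Rightarrow> (nat \<Rightarrow> 'a) \<Rightarrow> nat \<Rightarrow> nat \<Rightarrow> bool \<Rightarrow> 'a" where
  "Vn \<beta> Q z Y m' r' t = (if t then (if r' \<le> m' then \<beta> * z m' else if r' = Suc m' then Q * Y m' else 0)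
      else (if r' \<le> m' then 1 else 0))"

lemma ioc_Suc: "(r::nat) \<le> m \<Longrightarrow> {r<..Suc m} = insert (Suc m) {r<..m}" by auto
lemma ioc_pred: assumes "1 \<le> (r::nat)" "r \<le> m" shows "{r - 1<..m} = insert r {r<..m}"
proof (rule set_eqI)
  fix x
  have "r - 1 < x \<longleftrightarrow> x = r \<or> r < x" using assms by arith
  thus "x \<in> {r - 1<..m} \<longleftrightarrow> x \<in> insert r {r<..m}" using assms by auto
qed

lemma row_lemma_F:
  fixes \<beta> Q :: "'a::field"
  assumes zY: "\<And>a. 1 + \<beta> * z a = Q * Y a"
    and mm: "m' \<le> m" and rr: "r' \<le> r" and rm': "r' \<le> Suc m'" and rm: "r \<le> m"
  shows "Mr \<beta> Q z Y m m' r False False * Vn \<beta> Q z Y m' r' False + Mr \<beta> Q z Y m m' r False True * Vn \<beta> Q z Y m' r' True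
     = sig \<beta> Q z Y m m' r r'"
proof -
  let ?P = "\<lambda>k. \<Prod>a\<in>{k<..m}. z a"
  consider (lt) "r < m'" | (eq) "r = m'" | (eq1) "r = Suc m'" | (gt) "Suc m' < r" by linarith
  thus ?thesis
  proof cases
    case lt
    thus ?thesis using rr rm' by (auto simp: Mr_def Vn_def sig_def tau_def)
  next
    case eq
    thus ?thesis using rr rm' by (auto simp: Mr_def Vn_def sig_def tau_def)
  next
    case eq1
    have mlt: "m' < m" using eq1 rm by simp
    have pr: "?P (r - 1) = z r * ?P r"
    proof -
      have s: "{r - 1<..m} = insert r {r<..m}" by (rule ioc_pred) (use eq1 rm in auto)
      show ?thesis unfolding s by simp
    qed
    show ?thesis
    proof (cases "r' \<le> m'")
      case True
      have "Mr \<beta> Q z Y m m' r False False * Vn \<beta> Q z Y m' r' False + Mr \<beta> Q z Y m m' r False True * Vn \<beta> Q z Y m' r' True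
          = ?P r * (1 + \<beta> * z r) + ?P r * (\<beta> * z m')"
        using eq1 mlt True by (simp add: Mr_def Vn_def)
      also have "\<dots> = ?P r * (1 + \<beta> * z m') + \<beta> * (z r * ?P r)"
        by (simp add: algebra_simps)
      also have "\<dots> = ?P r * (Q * Y m') + \<beta> * (z r * ?P r)"
        using zY[of m'] by simp
      also have "\<dots> = sig \<beta> Q z Y m m' r r'"
        using eq1 True mlt rm pr by (simp add: sig_def tau_def)
      finally show ?thesis .
    next
      case False
      hence r': "r' = Suc m'" using rm' by simp
      show ?thesis using eq1 mlt r' by (simp add: Mr_def Vn_def sig_def tau_def)
    qed
  next
    case gt
    have mlt: "m' < m" using gt rm by simp
    have pr: "?P (r - 1) = z r * ?P r"
    proof -
      have s: "{r - 1<..m} = insert r {r<..m}" by (rule ioc_pred) (use gt rm in auto)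
      show ?thesis unfolding s by simp
    qed
    have rr': "r' < r" using gt rm' by simp
    have "Mr \<beta> Q z Y m m' r False False * Vn \<beta> Q z Y m' r' False + Mr \<beta> Q z Y m m' r False True * Vn \<beta> Q z Y m' r' True
        = ?P r * (1 + \<beta> * z r) * (Vn \<beta> Q z Y m' r' False + Vn \<beta> Q z Y m' r' True)"
      using gt mlt rm by (simp add: Mr_def algebra_simps)
    also have "Vn \<beta> Q z Y m' r' False + Vn \<beta> Q z Y m' r' True = Q * Y m'"
      using rm' zY[of m'] by (auto simp: Vn_def)
    also have "?P r * (1 + \<beta> * z r) * (Q * Y m') = sig \<beta> Q z Y m m' r r'"
    proof -
      have t1: "tau \<beta> Q z Y m m' r = ?P r * (Q * Y m')" using gt rm by (simp add: tau_def)
      have a1: "m' < r - 1" "r - 1 \<le> m" "m' \<le> r - 1" using gt rm by auto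
      have t2: "tau \<beta> Q z Y m m' (r - 1) = z r * ?P r * (Q * Y m')"
        unfolding tau_def using a1 pr by simp
      show ?thesis unfolding sig_def t1 t2 using rr' by (simp add: algebra_simps)
    qed
    finally show ?thesis .
  qed
qed

lemma row_lemma:
  fixes \<beta> Q :: "'a::field"
  assumes zY: "\<And>a. 1 + \<beta> * z a = Q * Y a"
    and mm: "m' \<le> m" and rr: "r' \<le> r" and rm': "r' \<le> Suc m'"
  shows "Mr \<beta> Q z Y m m' r t False * Vn \<beta> Q z Y m' r' False + Mr \<beta> Q z Y m m' r t True * Vn \<beta> Q z Y m' r' True
     = sig \<beta> Q z Y m m' r r' * Vr \<beta> Q z Y m r t"
proof -
  consider (le) "r \<le> m" | (eq) "r = Suc m" | (gt) "Suc m < r" by linarith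
  thus ?thesis
  proof cases
    case le
    note F = row_lemma_F[where z=z and Y=Y, OF zY mm rr rm' le]
    show ?thesis
    proof (cases t)
      case False thus ?thesis using F le by (simp add: Vr_def)
    next
      case True
      have M: "\<And>t'. Mr \<beta> Q z Y m m' r True t' = \<beta> * z (Suc m) * Mr \<beta> Q z Y m m' r False t'"
        using le by (simp add: Mr_def ioc_Suc)
      have "Mr \<beta> Q z Y m m' r t False * Vn \<beta> Q z Y m' r' False + Mr \<beta> Q z Y m m' r t True * Vn \<beta> Q z Y m' r' True
         = \<beta> * z (Suc m) * (Mr \<beta> Q z Y m m' r False False * Vn \<beta> Q z Y m' r' False + Mr \<beta> Q z Y m m' r False True * Vn \<beta> Q z Y m' r' True)"
        using True by (simp add: M algebra_simps)
      also have "\<dots> = \<beta> * z (Suc m) * sig \<beta> Q z Y m m' r r'" unfolding F ..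
      finally show ?thesis using True le by (simp add: Vr_def algebra_simps)
    qed
  next
    case eq
    show ?thesis
    proof (cases t)
      case False thus ?thesis using eq by (simp add: Mr_def Vr_def)
    next
      case True
      show ?thesis
      proof (cases "r' \<le> m'")
        case True2: True
        show ?thesis
        proof (cases "m' < m")
          case True3: True
          have "Mr \<beta> Q z Y m m' r t False * Vn \<beta> Q z Y m' r' False + Mr \<beta> Q z Y m m' r t True * Vn \<beta> Q z Y m' r' True
              = \<beta> * (1 + \<beta> * z (Suc m)) * (1 + \<beta> * z m')"
            using True True2 True3 eq by (simp add: Mr_def Vn_def algebra_simps)
          also have "\<dots> = \<beta> * (Q * Y (Suc m)) * (Q * Y m')" using zY[of "Suc m"] zY[of m'] by simp
          also have "\<dots> = sig \<beta> Q z Y m m' r r' * Vr \<beta> Q z Y m r t"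
            using True True2 True3 eq by (simp add: Vr_def sig_def tau_def algebra_simps)
          finally show ?thesis .
        next
          case False
          hence "m' = m" using mm by simp
          thus ?thesis using True True2 eq zY[of "Suc m"]
            by (simp add: Mr_def Vr_def Vn_def sig_def tau_def algebra_simps)
        qed
      next
        case False
        hence r': "r' = Suc m'" using rm' by simp
        show ?thesis
        proof (cases "m' < m")
          case True3: True
          show ?thesis using True r' True3 eq zY[of "Suc m"]
            by (simp add: Mr_def Vr_def Vn_def sig_def tau_def algebra_simps)
        next
          case False
          hence "m' = m" using mm by simp
          thus ?thesis using True r' eq by (simp add: Mr_def Vr_def Vn_def sig_def tau_def)
        qed
      qed
    qed
  next
    case gt
    thus ?thesis by (simp add: Mr_def Vr_def)
  qed
qed

fun tm :: "(nat \<Rightarrow> bool \<Rightarrow> bool \<Rightarrow> 'a::comm_ring_1) \<Rightarrow> nat \<Rightarrow> nat \<Rightarrow> bool \<Rightarrow> 'a" where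
  "tm M j 0 t = (if t then 0 else 1)"
| "tm M j (Suc n) t = M j t False * tm M (Suc j) n False + M j t True * tm M (Suc j) n True"

lemma tm_gauge:
  assumes "\<And>i t. j \<le> i \<Longrightarrow> i < j + n \<Longrightarrow> M i t False * V (Suc i) False + M i t True * V (Suc i) True = \<sigma> i * V i t"
    and "\<And>t. V (j + n) t = (if t then 0 else 1)"
  shows "tm M j n t = (\<Prod>i\<in>{j..<j + n}. \<sigma> i) * V j t"
  using assms
proof (induction n arbitrary: j t)
  case 0 thus ?case by simp
next
  case (Suc n)
  have IH: "\<And>t. tm M (Suc j) n t = (\<Prod>i\<in>{Suc j..<Suc j + n}. \<sigma> i) * V (Suc j) t"
    using Suc.prems by (intro Suc.IH) auto
  have "tm M j (Suc n) t = (\<Prod>i\<in>{Suc j..<Suc j + n}. \<sigma> i) * (M j t False * V (Suc j) False + M j t True * V (Suc j) True)"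
    by (simp add: IH algebra_simps)
  also have "\<dots> = (\<Prod>i\<in>{Suc j..<Suc j + n}. \<sigma> i) * (\<sigma> j * V j t)" using Suc.prems(1)[of j t] by simp
  also have "(\<Prod>i\<in>{j..<j + Suc n}. \<sigma> i) = \<sigma> j * (\<Prod>i\<in>{Suc j..<Suc j + n}. \<sigma> i)"
    by (simp add: prod.atLeast_Suc_lessThan)
  ultimately show ?case by (simp add: ac_simps)
qed

lemma sum_Pow_insert:
  assumes "finite B" "x \<notin> B"
  shows "(\<Sum>T\<in>Pow (insert x B). f T) = (\<Sum>T\<in>Pow B. f T) + (\<Sum>T\<in>Pow B. f (insert x T))"
proof -
  have "Pow (insert x B) = Pow B \<union> insert x ` Pow B" by (rule Pow_insert)
  moreover have "Pow B \<inter> insert x ` Pow B = {}" using assms by auto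
  moreover have "inj_on (insert x) (Pow B)" using assms by (auto simp: inj_on_def)
  ultimately show ?thesis using assms by (simp add: sum.union_disjoint sum.reindex)
qed

lemma tm_subsets_aux:
  "(\<Sum>T\<in>Pow {Suc j..<Suc j + n}. \<Prod>i\<in>{j..<Suc j + n}.
      M i (i \<in> (if t then insert j T else T)) (Suc i \<in> (if t then insert j T else T))) = tm M j (Suc n) t"
proof (induction n arbitrary: j t)
  case 0
  have a: "{j..<Suc j + 0} = {j}" by auto
  have b: "{Suc j..<Suc j + 0} = {}" by auto
  show ?case unfolding a b by (cases t) simp_all
next
  case (Suc n)
  let ?B = "{Suc (Suc j)..<Suc (Suc j) + n}"
  have U: "{Suc j..<Suc j + Suc n} = insert (Suc j) ?B" by auto
  have I: "{j..<Suc j + Suc n} = insert j {Suc j..<Suc (Suc j) + n}" by auto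
  let ?F = "\<lambda>t' T. \<Prod>i\<in>{Suc j..<Suc (Suc j) + n}. M i (i \<in> (if t' then insert (Suc j) T else T)) (Suc i \<in> (if t' then insert (Suc j) T else T))"
  have split: "\<And>T. T \<subseteq> insert (Suc j) ?B \<Longrightarrow> (\<Prod>i\<in>{j..<Suc j + Suc n}.
      M i (i \<in> (if t then insert j T else T)) (Suc i \<in> (if t then insert j T else T)))
      = M j t (Suc j \<in> T) * (\<Prod>i\<in>{Suc j..<Suc (Suc j) + n}. M i (i \<in> T) (Suc i \<in> T))"
  proof -
    fix T assume T: "T \<subseteq> insert (Suc j) ?B"
    have jT: "j \<notin> T" using T by auto
    have "(\<Prod>i\<in>{j..<Suc j + Suc n}. M i (i \<in> (if t then insert j T else T)) (Suc i \<in> (if t then insert j T else T)))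
      = M j t (Suc j \<in> T) * (\<Prod>i\<in>{Suc j..<Suc (Suc j) + n}. M i (i \<in> (if t then insert j T else T)) (Suc i \<in> (if t then insert j T else T)))"
      unfolding I using jT by (subst prod.insert) auto
    also have "(\<Prod>i\<in>{Suc j..<Suc (Suc j) + n}. M i (i \<in> (if t then insert j T else T)) (Suc i \<in> (if t then insert j T else T)))
       = (\<Prod>i\<in>{Suc j..<Suc (Suc j) + n}. M i (i \<in> T) (Suc i \<in> T))"
      by (intro prod.cong) auto
    finally show "?thesis T" .
  qed
  have "(\<Sum>T\<in>Pow {Suc j..<Suc j + Suc n}. \<Prod>i\<in>{j..<Suc j + Suc n}.
      M i (i \<in> (if t then insert j T else T)) (Suc i \<in> (if t then insert j T else T)))
    = (\<Sum>T\<in>Pow ?B. M j t False * ?F False T) + (\<Sum>T\<in>Pow ?B. M j t True * ?F True T)"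
  proof -
    have "(\<Sum>T\<in>Pow {Suc j..<Suc j + Suc n}. \<Prod>i\<in>{j..<Suc j + Suc n}.
      M i (i \<in> (if t then insert j T else T)) (Suc i \<in> (if t then insert j T else T)))
      = (\<Sum>T\<in>Pow (insert (Suc j) ?B). M j t (Suc j \<in> T) * (\<Prod>i\<in>{Suc j..<Suc (Suc j) + n}. M i (i \<in> T) (Suc i \<in> T)))"
      unfolding U by (intro sum.cong refl split) auto
    also have "\<dots> = (\<Sum>T\<in>Pow ?B. M j t (Suc j \<in> T) * (\<Prod>i\<in>{Suc j..<Suc (Suc j) + n}. M i (i \<in> T) (Suc i \<in> T)))
       + (\<Sum>T\<in>Pow ?B. M j t (Suc j \<in> insert (Suc j) T) * (\<Prod>i\<in>{Suc j..<Suc (Suc j) + n}. M i (i \<in> insert (Suc j) T) (Suc i \<in> insert (Suc j) T)))"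
      by (rule sum_Pow_insert) auto
    also have "(\<Sum>T\<in>Pow ?B. M j t (Suc j \<in> T) * (\<Prod>i\<in>{Suc j..<Suc (Suc j) + n}. M i (i \<in> T) (Suc i \<in> T)))
       = (\<Sum>T\<in>Pow ?B. M j t False * ?F False T)"
    proof (intro sum.cong refl)
      fix T assume "T \<in> Pow ?B" hence "Suc j \<notin> T" by auto
      thus "M j t (Suc j \<in> T) * (\<Prod>i\<in>{Suc j..<Suc (Suc j) + n}. M i (i \<in> T) (Suc i \<in> T)) = M j t False * ?F False T"
        by simp
    qed
    also have "(\<Sum>T\<in>Pow ?B. M j t (Suc j \<in> insert (Suc j) T) * (\<Prod>i\<in>{Suc j..<Suc (Suc j) + n}. M i (i \<in> insert (Suc j) T) (Suc i \<in> insert (Suc j) T)))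
       = (\<Sum>T\<in>Pow ?B. M j t True * ?F True T)"
      by (intro sum.cong refl) auto
    finally show ?thesis .
  qed
  also have "\<dots> = M j t False * tm M (Suc j) (Suc n) False + M j t True * tm M (Suc j) (Suc n) True"
  proof -
    have h1: "(\<Sum>T\<in>Pow ?B. ?F False T) = tm M (Suc j) (Suc n) False" by (rule Suc.IH)
    have h2: "(\<Sum>T\<in>Pow ?B. ?F True T) = tm M (Suc j) (Suc n) True" by (rule Suc.IH)
    show ?thesis by (simp only: sum_distrib_left[symmetric] h1 h2)
  qed
  also have "\<dots> = tm M j (Suc (Suc n)) t" by (simp only: tm.simps)
  finally show ?case .
qed

lemma tm_subsets:
  "(\<Sum>T\<in>Pow {j..<j + n}. \<Prod>i\<in>{j..<j + n}. M i (i \<in> T) (Suc i \<in> T)) = tm M j n False + tm M j n True"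
proof (cases n)
  case 0 thus ?thesis by simp
next
  case (Suc n')
  let ?B = "{Suc j..<Suc j + n'}"
  have e: "{j..<j + n} = {j..<Suc j + n'}" using Suc by simp
  have PU: "Pow {j..<Suc j + n'} = Pow (insert j ?B)" by (rule arg_cong[where f=Pow]) auto
  have a1: "(\<Sum>T\<in>Pow ?B. \<Prod>i\<in>{j..<Suc j + n'}. M i (i \<in> T) (Suc i \<in> T)) = tm M j (Suc n') False"
    using tm_subsets_aux[where j=j and n=n' and M=M and t=False] unfolding if_False .
  have a2: "(\<Sum>T\<in>Pow ?B. \<Prod>i\<in>{j..<Suc j + n'}. M i (i \<in> insert j T) (Suc i \<in> insert j T)) = tm M j (Suc n') True"
    using tm_subsets_aux[where j=j and n=n' and M=M and t=True] unfolding if_True .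
  have "(\<Sum>T\<in>Pow {j..<j + n}. \<Prod>i\<in>{j..<j + n}. M i (i \<in> T) (Suc i \<in> T))
     = (\<Sum>T\<in>Pow (insert j ?B). \<Prod>i\<in>{j..<Suc j + n'}. M i (i \<in> T) (Suc i \<in> T))"
    unfolding e PU ..
  also have "\<dots> = (\<Sum>T\<in>Pow ?B. \<Prod>i\<in>{j..<Suc j + n'}. M i (i \<in> T) (Suc i \<in> T))
     + (\<Sum>T\<in>Pow ?B. \<Prod>i\<in>{j..<Suc j + n'}. M i (i \<in> insert j T) (Suc i \<in> insert j T))"
    by (rule sum_Pow_insert) auto
  also have "\<dots> = tm M j n False + tm M j n True" unfolding a1 a2 Suc ..
  finally show ?thesis .
qed

definition addS :: "(nat \<Rightarrow> nat) \<Rightarrow> nat set" where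
  "addS k = {i. 1 \<le> i \<and> (i = 1 \<or> k i < k (i - 1))}"
definition remS :: "(nat \<Rightarrow> nat) \<Rightarrow> nat set" where
  "remS r = {i. 1 \<le> i \<and> r (Suc i) < r i}"
definition addT :: "(nat \<Rightarrow> nat) \<Rightarrow> nat set \<Rightarrow> nat \<Rightarrow> nat" where
  "addT k T = (\<lambda>i. k i + (if i \<in> T then 1 else 0))"
definition subT :: "(nat \<Rightarrow> nat) \<Rightarrow> nat set \<Rightarrow> nat \<Rightarrow> nat" where
  "subT r S = (\<lambda>i. r i - (if i \<in> S then 1 else 0))"
definition rk :: "(nat \<Rightarrow> nat) \<Rightarrow> (nat \<Rightarrow> nat) \<Rightarrow> bool" where
  "rk k r \<longleftrightarrow> (\<exists>T\<subseteq>addS k. r = addT k T)"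
definition nd :: "(nat \<Rightarrow> nat) \<Rightarrow> (nat \<Rightarrow> nat) \<Rightarrow> nat" where
  "nd k r = card {i. k i \<noteq> r i}"

lemma ispf0: "ispf m \<Longrightarrow> m 0 = 0" by (simp add: ispf_def)
lemma ispfM: "ispf m \<Longrightarrow> 1 \<le> i \<Longrightarrow> i \<le> j \<Longrightarrow> m j \<le> m i" unfolding ispf_def by blast

lemma ispf_supp: "ispf m \<Longrightarrow> \<exists>L. \<forall>i>L. m i = 0" by (simp add: ispf_def)

lemma addS_sub: assumes "\<forall>i>L. k i = 0" shows "addS k \<subseteq> {1..Suc L}"
proof
  fix i assume i: "i \<in> addS k"
  show "i \<in> {1..Suc L}"
  proof (rule ccontr)
    assume "i \<notin> {1..Suc L}"
    hence "i > Suc L" using i by (auto simp: addS_def)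
    thus False using i assms by (auto simp: addS_def)
  qed
qed

lemma finite_addS: assumes "ispf k" shows "finite (addS k)"
proof -
  obtain L where L: "\<forall>i>L. k i = 0" using assms by (auto simp: ispf_def)
  show ?thesis using addS_sub[OF L] finite_subset by blast
qed

lemma remS_sub: assumes "\<forall>i>L. r i = 0" shows "remS r \<subseteq> {1..L}"
proof
  fix i assume i: "i \<in> remS r"
  show "i \<in> {1..L}"
  proof (rule ccontr)
    assume "i \<notin> {1..L}"
    hence "i > L" using i by (auto simp: remS_def)
    thus False using i assms by (auto simp: remS_def)
  qed
qed

lemma addT_inj: "inj_on (addT k) X"
proof (rule inj_onI)
  fix T1 T2 assume e: "addT k T1 = addT k T2"
  have "\<And>i. (i \<in> T1) = (i \<in> T2)"
  proof -
    fix i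
    have "addT k T1 i = addT k T2 i" using e by simp
    thus "(i \<in> T1) = (i \<in> T2)" unfolding addT_def by (simp split: if_splits)
  qed
  thus "T1 = T2" by blast
qed

lemma nd_addT: "nd k (addT k T) = card T"
  unfolding nd_def addT_def by (rule arg_cong[where f=card]) auto

lemma addT_ispf:
  assumes k: "ispf k" and T: "T \<subseteq> addS k"
  shows "ispf (addT k T)"
  unfolding ispf_def
proof (intro conjI allI impI)
  have "0 \<notin> T" using T by (auto simp: addS_def)
  thus "addT k T 0 = 0" using ispf0[OF k] by (simp add: addT_def)
  obtain L where L: "\<forall>i>L. k i = 0" using k by (auto simp: ispf_def)
  show "\<exists>L. \<forall>i>L. addT k T i = 0"
  proof (intro exI allI impI)
    fix i assume "i > Suc L"
    thus "addT k T i = 0" using L addS_sub[OF L] T by (auto simp: addT_def)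
  qed
  fix i j :: nat assume ij: "1 \<le> i" "i \<le> j"
  show "addT k T j \<le> addT k T i"
  proof (cases "i = j")
    case False
    hence ij2: "i < j" using ij by simp
    have m1: "k j \<le> k (Suc i)" using ispfM[OF k, of "Suc i" j] ij2 by simp
    have m2: "k (Suc i) \<le> k i" using ispfM[OF k ij(1), of "Suc i"] by simp
    show ?thesis
    proof (cases "j \<in> T")
      case True
      hence "k j < k (j - 1)" using T ij2 ij by (auto simp: addS_def)
      moreover have "k (j - 1) \<le> k i" using ispfM[OF k ij(1), of "j - 1"] ij2 by simp
      ultimately show ?thesis by (auto simp: addT_def)
    next
      case False
      thus ?thesis using m1 m2 by (auto simp: addT_def)
    qed
  qed simp
qed

lemma interlace_facts:
  assumes "interlace n r"
  shows "r 0 = 0" "\<And>i. 1 \<le> i \<Longrightarrow> n (Suc i) \<le> r i" "\<And>i. 1 \<le> i \<Longrightarrow> r i \<le> n i"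
  using assms unfolding interlace_def by blast+

lemma interlace_ispf:
  assumes il: "interlace n r" and L: "\<forall>i>L. n i = 0"
  shows "ispf r"
  unfolding ispf_def
proof (intro conjI allI impI)
  note F = interlace_facts[OF il]
  show "r 0 = 0" by (rule F(1))
  show "\<exists>L. \<forall>i>L. r i = 0"
  proof (intro exI allI impI)
    fix i assume i: "i > L"
    have "r i \<le> n i" using F(3)[of i] i by simp
    thus "r i = 0" using L i by simp
  qed
  fix i j :: nat assume ij: "1 \<le> i" "i \<le> j"
  from ij(2) show "r j \<le> r i"
  proof (induction j rule: dec_induct)
    case base thus ?case by simp
  next
    case (step j)
    have j1: "1 \<le> j" using step ij by simp
    have "r (Suc j) \<le> n (Suc j)" using F(3)[of "Suc j"] by simp
    also have "n (Suc j) \<le> r j" using F(2)[OF j1] .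
    finally show ?case using step by simp
  qed
qed

lemma rk_to_sub:
  assumes k: "ispf k" and T: "T \<subseteq> addS k"
  shows "T \<subseteq> remS (addT k T)" "k = subT (addT k T) T"
proof -
  show "k = subT (addT k T) T" by (auto simp: subT_def addT_def)
  show "T \<subseteq> remS (addT k T)"
  proof
    fix i assume i: "i \<in> T"
    have "i \<in> addS k" using T i by blast
    hence i1: "1 \<le> i" by (simp add: addS_def)
    have "addT k T (Suc i) < addT k T i"
    proof (cases "Suc i \<in> T")
      case True
      have "Suc i \<in> addS k" using T True by blast
      hence "k (Suc i) < k i" using i1 unfolding addS_def by simp
      thus ?thesis using i True by (simp add: addT_def)
    next
      case False
      have "k (Suc i) \<le> k i" using ispfM[OF k i1, of "Suc i"] by simp
      thus ?thesis using i False by (simp add: addT_def)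
    qed
    thus "i \<in> remS (addT k T)" using i1 by (simp add: remS_def)
  qed
qed

lemma sub_to_rk:
  assumes r: "ispf r" and S: "S \<subseteq> remS r"
  shows "ispf (subT r S)" "S \<subseteq> addS (subT r S)" "r = addT (subT r S) S"
proof -
  have pos: "\<And>i. i \<in> S \<Longrightarrow> 1 \<le> r i"
  proof -
    fix i assume "i \<in> S" hence "i \<in> remS r" using S by blast
    thus "1 \<le> r i" unfolding remS_def by simp
  qed
  show "r = addT (subT r S) S"
    using pos by (auto simp: subT_def addT_def fun_eq_iff)
  have mono: "\<And>i j. 1 \<le> i \<Longrightarrow> i \<le> j \<Longrightarrow> r j \<le> r i" using ispfM[OF r] by blast
  show "ispf (subT r S)"
    unfolding ispf_def
  proof (intro conjI allI impI)
    show "subT r S 0 = 0" using ispf0[OF r] by (simp add: subT_def)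
    obtain L where L: "\<forall>i>L. r i = 0" using r by (auto simp: ispf_def)
    show "\<exists>L. \<forall>i>L. subT r S i = 0"
    proof (intro exI allI impI)
      fix i assume "i > L" thus "subT r S i = 0" using L by (simp add: subT_def)
    qed
    fix i j :: nat assume ij: "1 \<le> i" "i \<le> j"
    show "subT r S j \<le> subT r S i"
    proof (cases "i = j")
      case False
      hence "i < j" using ij by simp
      show ?thesis
      proof (cases "i \<in> S")
        case True
        hence "i \<in> remS r" using S by blast
        hence "r (Suc i) < r i" unfolding remS_def by simp
        moreover have "r j \<le> r (Suc i)" using mono[of "Suc i" j] \<open>i < j\<close> by simp
        ultimately show ?thesis using True by (auto simp: subT_def)
      next
        case False
        thus ?thesis using mono[OF ij] by (auto simp: subT_def)
      qed
    qed simp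
  qed
  show "S \<subseteq> addS (subT r S)"
  proof
    fix i assume i: "i \<in> S"
    hence "i \<in> remS r" using S by blast
    hence i1: "1 \<le> i" unfolding remS_def by simp
    show "i \<in> addS (subT r S)"
    proof (cases "i = 1")
      case True thus ?thesis by (simp add: addS_def)
    next
      case False
      hence i2: "2 \<le> i" using i1 by simp
      have ri: "1 \<le> r i" using pos i by simp
      have "r i \<le> r (i - 1)" using mono[of "i - 1" i] i2 by simp
      moreover have "i - 1 \<in> S \<Longrightarrow> r i < r (i - 1)"
      proof -
        assume "i - 1 \<in> S" hence "i - 1 \<in> remS r" using S by blast
        hence "r (Suc (i - 1)) < r (i - 1)" unfolding remS_def by simp
        thus "r i < r (i - 1)" using i2 by simp
      qed
      ultimately have "subT r S i < subT r S (i - 1)" using i ri by (auto simp: subT_def)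
      thus ?thesis using i1 by (simp add: addS_def)
    qed
  qed
qed

lemma subT_inj: assumes "ispf r" shows "inj_on (subT r) (Pow (remS r))"
proof (rule inj_onI)
  fix S1 S2 assume S: "S1 \<in> Pow (remS r)" "S2 \<in> Pow (remS r)" "subT r S1 = subT r S2"
  have pos: "\<And>i. i \<in> remS r \<Longrightarrow> 1 \<le> r i" by (auto simp: remS_def)
  have "\<And>i. (i \<in> S1) = (i \<in> S2)"
  proof -
    fix i
    have "subT r S1 i = subT r S2 i" using S by simp
    thus "(i \<in> S1) = (i \<in> S2)" using S pos[of i] by (auto simp: subT_def split: if_splits)
  qed
  thus "S1 = S2" by blast
qed

lemma nd_subT: assumes "S \<subseteq> remS r" shows "nd (subT r S) r = card S"
proof -
  have "{i. subT r S i \<noteq> r i} = S" using assms by (auto simp: subT_def remS_def)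
  thus ?thesis by (simp add: nd_def)
qed

definition Wf :: "'a::field \<Rightarrow> (nat \<Rightarrow> 'a) \<Rightarrow> (nat \<Rightarrow> 'a) \<Rightarrow> nat \<Rightarrow> (nat \<Rightarrow> nat) \<Rightarrow> (nat \<Rightarrow> nat) \<Rightarrow> 'a" where
  "Wf \<beta> x y d m k = (\<Prod>i\<in>{1..d}. wrow \<beta> x y d i (m i) (k i) (m (Suc i)))"
definition cfac :: "'a::field \<Rightarrow> (nat \<Rightarrow> 'a) \<Rightarrow> nat \<Rightarrow> (nat \<Rightarrow> nat) \<Rightarrow> 'a" where
  "cfac \<beta> y d m = (\<Prod>i\<in>{1..d}. 1 + \<beta> * y (m i + d - i + 1))"
definition zz :: "'a::field \<Rightarrow> (nat \<Rightarrow> 'a) \<Rightarrow> (nat \<Rightarrow> 'a) \<Rightarrow> nat \<Rightarrow> nat \<Rightarrow> nat \<Rightarrow> 'a" where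
  "zz \<beta> x y d i a = hh \<beta> x y d (i, a)"
definition YY :: "'a::field \<Rightarrow> (nat \<Rightarrow> 'a) \<Rightarrow> nat \<Rightarrow> nat \<Rightarrow> nat \<Rightarrow> 'a" where
  "YY \<beta> y d i a = 1 + \<beta> * y (a + d - i)"
definition Mj where
  "Mj \<beta> x y d m r j t t' = Mr \<beta> (1 + \<beta> * x d) (zz \<beta> x y d j) (YY \<beta> y d j) (m j) (m (Suc j)) (r j) t t'"
definition sg where
  "sg \<beta> x y d m r j = sig \<beta> (1 + \<beta> * x d) (zz \<beta> x y d j) (YY \<beta> y d j) (m j) (m (Suc j)) (r j) (r (Suc j))"
definition tj where
  "tj \<beta> x y d m j k = tau \<beta> (1 + \<beta> * x d) (zz \<beta> x y d j) (YY \<beta> y d j) (m j) (m (Suc j)) k"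
definition Vj where
  "Vj \<beta> x y d m r j t = (if j = Suc d then (if t then 0 else 1)
      else Vr \<beta> (1 + \<beta> * x d) (zz \<beta> x y d j) (YY \<beta> y d j) (m j) (r j) t)"

lemma content_idx_eq: "i \<le> r \<Longrightarrow> content_idx r (i, a) = a + r - i"
  by (simp add: content_idx_def)

lemma zY: "i \<le> d \<Longrightarrow> 1 + \<beta> * zz \<beta> x y d i a = (1 + \<beta> * x d) * YY \<beta> y d i a"
  by (simp add: zz_def YY_def hh_def goplus_def content_idx_eq algebra_simps)

lemma zz_shift: "Suc i \<le> d \<Longrightarrow> zz \<beta> x y d (Suc i) (Suc a) = zz \<beta> x y d i a"
  by (simp add: zz_def hh_def content_idx_eq)

lemma YY_shift: "YY \<beta> y d (Suc i) (Suc a) = YY \<beta> y d i a"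
  by (simp add: YY_def)

lemma prod_if_zero:
  assumes "finite S"
  shows "(\<Prod>j\<in>S. if P j then f j else 0) = (if (\<forall>j\<in>S. P j) then prod f S else (0::'a::comm_semiring_1))"
proof (cases "\<forall>j\<in>S. P j")
  case True thus ?thesis by (auto intro: prod.cong)
next
  case False
  then obtain j where "j \<in> S" "\<not> P j" by blast
  thus ?thesis using assms False by (auto intro!: prod_zero)
qed

lemma prod_indicator_pow:
  assumes "T \<subseteq> A" "finite A"
  shows "(\<Prod>j\<in>A. if j \<in> T then \<beta> else 1) = \<beta> ^ card T"
proof -
  have "(\<Prod>j\<in>A. if j \<in> T then \<beta> else 1) = (\<Prod>j\<in>{j\<in>A. j \<in> T}. \<beta>)"
    using prod.inter_filter[OF assms(2), of "\<lambda>_. \<beta>" "\<lambda>j. j \<in> T"] by simp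
  also have "{j\<in>A. j \<in> T} = T" using assms by auto
  finally show ?thesis by simp
qed

context
  fixes \<beta> :: "'a::field" and x y :: "nat \<Rightarrow> 'a" and e :: nat and m r :: "nat \<Rightarrow> nat"
  assumes mP: "ispf m" and mD: "\<forall>i>Suc e. m i = 0" and rP: "ispf r" and rD: "\<forall>i>e. r i = 0"
begin

lemma Mj_prod:
  assumes T: "T \<subseteq> {1..Suc e}"
  shows "(\<Prod>j\<in>{1..Suc e}. Mj \<beta> x y (Suc e) m r j (j \<in> T) (Suc j \<in> T)) =
    (if T \<subseteq> addS m \<and> interlace (addT m T) r then \<beta> ^ card T * Wf \<beta> x y (Suc e) (addT m T) r else 0)"
proof -
  let ?d = "Suc e" and ?A = "{1..Suc e}" and ?n = "addT m T"
  let ?P = "\<lambda>j. \<not> (Suc j \<in> T \<and> \<not> m (Suc j) < m j) \<and> ?n (Suc j) \<le> r j \<and> r j \<le> ?n j"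
  let ?C = "\<lambda>j. (if j \<in> T then \<beta> else 1) * wrow \<beta> x y ?d j (?n j) (r j) (?n (Suc j))"
  have M: "\<And>j. Mj \<beta> x y ?d m r j (j \<in> T) (Suc j \<in> T) = (if ?P j then ?C j else 0)"
    by (simp add: Mj_def Mr_def addT_def wrow_def zz_def)
  have iff1: "(\<forall>j\<in>?A. \<not> (Suc j \<in> T \<and> \<not> m (Suc j) < m j)) \<longleftrightarrow> T \<subseteq> addS m"
  proof
    assume a: "\<forall>j\<in>?A. \<not> (Suc j \<in> T \<and> \<not> m (Suc j) < m j)"
    show "T \<subseteq> addS m"
    proof
      fix i assume i: "i \<in> T"
      hence i1: "1 \<le> i" "i \<le> Suc e" using T by auto
      show "i \<in> addS m"
      proof (cases "i = 1")
        case True thus ?thesis by (simp add: addS_def)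
      next
        case False
        hence "i - 1 \<in> ?A" "Suc (i - 1) = i" using i1 by auto
        hence "m i < m (i - 1)" using a i by force
        thus ?thesis using i1 by (simp add: addS_def)
      qed
    qed
  next
    assume a: "T \<subseteq> addS m"
    show "\<forall>j\<in>?A. \<not> (Suc j \<in> T \<and> \<not> m (Suc j) < m j)"
    proof (intro ballI notI)
      fix j assume j: "j \<in> ?A" and b: "Suc j \<in> T \<and> \<not> m (Suc j) < m j"
      hence "Suc j \<in> addS m" using a by blast
      hence "m (Suc j) < m j" using j unfolding addS_def by simp
      thus False using b by simp
    qed
  qed
  have nz: "\<And>i. i > Suc e \<Longrightarrow> ?n i = 0" using mD T by (auto simp: addT_def)
  have iff2: "(\<forall>j\<in>?A. ?n (Suc j) \<le> r j \<and> r j \<le> ?n j) \<longleftrightarrow> interlace ?n r"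
  proof
    assume a: "\<forall>j\<in>?A. ?n (Suc j) \<le> r j \<and> r j \<le> ?n j"
    have r0: "r 0 = 0" using ispf0[OF rP] .
    have "\<forall>i\<ge>1. ?n (Suc i) \<le> r i \<and> r i \<le> ?n i"
    proof (intro allI impI)
      fix i :: nat assume i: "1 \<le> i"
      show "?n (Suc i) \<le> r i \<and> r i \<le> ?n i"
      proof (cases "i \<le> Suc e")
        case True thus ?thesis using a i by auto
      next
        case False
        thus ?thesis using nz[of i] nz[of "Suc i"] rD by simp
      qed
    qed
    thus "interlace ?n r" using r0 unfolding interlace_def by blast
  next
    assume "interlace ?n r"
    thus "\<forall>j\<in>?A. ?n (Suc j) \<le> r j \<and> r j \<le> ?n j" unfolding interlace_def by auto
  qed
  have "(\<Prod>j\<in>?A. Mj \<beta> x y ?d m r j (j \<in> T) (Suc j \<in> T)) = (\<Prod>j\<in>?A. if ?P j then ?C j else 0)"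
    using M by (intro prod.cong) auto
  also have "\<dots> = (if (\<forall>j\<in>?A. ?P j) then prod ?C ?A else 0)" by (rule prod_if_zero) simp
  finally have c1: "(\<Prod>j\<in>?A. Mj \<beta> x y ?d m r j (j \<in> T) (Suc j \<in> T)) = (if (\<forall>j\<in>?A. ?P j) then prod ?C ?A else 0)" .
  have c2: "(\<forall>j\<in>?A. ?P j) \<longleftrightarrow> T \<subseteq> addS m \<and> interlace ?n r"
    using iff1 iff2 by blast
  have c3: "prod ?C ?A = \<beta> ^ card T * Wf \<beta> x y ?d ?n r"
    unfolding Wf_def prod.distrib prod_indicator_pow[OF T finite_atLeastAtMost] ..
  show ?thesis unfolding c1 c2 c3 ..
qed

lemma coefR_tm:
  "(\<Sum>T\<in>Pow (addS m \<inter> {1..Suc e}). \<beta> ^ card T * (if interlace (addT m T) r then Wf \<beta> x y (Suc e) (addT m T) r else 0))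
   = (\<Sum>T\<in>Pow {1..<1 + Suc e}. \<Prod>j\<in>{1..<1 + Suc e}. Mj \<beta> x y (Suc e) m r j (j \<in> T) (Suc j \<in> T))"
proof -
  let ?A = "{1..Suc e}"
  have e1: "{1..<1 + Suc e} = ?A" by auto
  have "(\<Sum>T\<in>Pow ?A. \<Prod>j\<in>?A. Mj \<beta> x y (Suc e) m r j (j \<in> T) (Suc j \<in> T))
      = (\<Sum>T\<in>Pow ?A. if T \<subseteq> addS m then \<beta> ^ card T * (if interlace (addT m T) r then Wf \<beta> x y (Suc e) (addT m T) r else 0) else 0)"
    using Mj_prod by (intro sum.cong refl) auto
  also have "\<dots> = (\<Sum>T\<in>{T\<in>Pow ?A. T \<subseteq> addS m}. \<beta> ^ card T * (if interlace (addT m T) r then Wf \<beta> x y (Suc e) (addT m T) r else 0))"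
    by (rule sum.inter_filter[symmetric]) simp
  also have "{T\<in>Pow ?A. T \<subseteq> addS m} = Pow (addS m \<inter> ?A)" by auto
  finally show ?thesis unfolding e1 by simp
qed

lemma zYj: "j \<le> Suc e \<Longrightarrow> (\<And>a. 1 + \<beta> * zz \<beta> x y (Suc e) j a = (1 + \<beta> * x (Suc e)) * YY \<beta> y (Suc e) j a)"
  by (rule zY)

lemma row_step:
  assumes A: "\<forall>j. r j \<le> Suc (m j)" and j: "1 \<le> j" "j < 1 + Suc e"
  shows "Mj \<beta> x y (Suc e) m r j t False * Vj \<beta> x y (Suc e) m r (Suc j) False
       + Mj \<beta> x y (Suc e) m r j t True * Vj \<beta> x y (Suc e) m r (Suc j) True
       = sg \<beta> x y (Suc e) m r j * Vj \<beta> x y (Suc e) m r j t"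
proof -
  let ?d = "Suc e" and ?Q = "1 + \<beta> * x (Suc e)"
  have jd: "j \<le> ?d" using j by simp
  have mm: "m (Suc j) \<le> m j" using ispfM[OF mP j(1), of "Suc j"] by simp
  have rr: "r (Suc j) \<le> r j" using ispfM[OF rP j(1), of "Suc j"] by simp
  have rm: "r (Suc j) \<le> Suc (m (Suc j))" using A by simp
  note RL = row_lemma[where z="zz \<beta> x y ?d j" and Y="YY \<beta> y ?d j" and \<beta>=\<beta> and Q="?Q",
      OF zYj[OF jd] mm rr rm, of t]
  have Vjj: "Vj \<beta> x y ?d m r j t = Vr \<beta> ?Q (zz \<beta> x y ?d j) (YY \<beta> y ?d j) (m j) (r j) t"
    using jd by (simp add: Vj_def)
  show ?thesis
  proof (cases "j = ?d")
    case False
    hence jd2: "Suc j \<le> ?d" using jd by simp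
    have "\<And>t'. Vj \<beta> x y ?d m r (Suc j) t' = Vn \<beta> ?Q (zz \<beta> x y ?d j) (YY \<beta> y ?d j) (m (Suc j)) (r (Suc j)) t'"
      using jd2 by (simp add: Vj_def Vr_def Vn_def zz_shift YY_shift)
    thus ?thesis using RL Vjj by (simp add: Mj_def sg_def)
  next
    case True
    have m0: "m (Suc j) = 0" using mD True by simp
    have r0: "r (Suc j) = 0" "r j = 0" using rD True by auto
    have MT: "Mj \<beta> x y ?d m r j t True = 0" using r0 by (simp add: Mj_def Mr_def)
    have V1: "Vj \<beta> x y ?d m r (Suc j) False = 1" "Vj \<beta> x y ?d m r (Suc j) True = 0"
      using True by (simp_all add: Vj_def)
    have Vn1: "Vn \<beta> ?Q (zz \<beta> x y ?d j) (YY \<beta> y ?d j) (m (Suc j)) (r (Suc j)) False = 1"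
      using m0 r0 by (simp add: Vn_def)
    show ?thesis using RL MT V1 Vn1 Vjj by (simp add: Mj_def sg_def)
  qed
qed

lemma coefR_val:
  "(\<Sum>T\<in>Pow (addS m \<inter> {1..Suc e}). \<beta> ^ card T * (if interlace (addT m T) r then Wf \<beta> x y (Suc e) (addT m T) r else 0))
   = (1 + \<beta> * x (Suc e)) * YY \<beta> y (Suc e) 1 (Suc (m 1)) * (\<Prod>j\<in>{1..Suc e}. sg \<beta> x y (Suc e) m r j)"
proof (cases "\<forall>j. r j \<le> Suc (m j)")
  case A: True
  let ?M = "Mj \<beta> x y (Suc e) m r" and ?V = "Vj \<beta> x y (Suc e) m r" and ?s = "sg \<beta> x y (Suc e) m r"
  have g: "\<And>t. tm ?M 1 (Suc e) t = (\<Prod>i\<in>{1..<1 + Suc e}. ?s i) * ?V 1 t"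
    by (rule tm_gauge) (use row_step[OF A] in \<open>auto simp: Vj_def\<close>)
  have V1: "?V 1 False + ?V 1 True = (1 + \<beta> * x (Suc e)) * YY \<beta> y (Suc e) 1 (Suc (m 1))"
  proof -
    have r1: "r 1 \<le> Suc (m 1)" using A by simp
    have z: "1 + \<beta> * zz \<beta> x y (Suc e) 1 (Suc (m 1)) = (1 + \<beta> * x (Suc e)) * YY \<beta> y (Suc e) 1 (Suc (m 1))"
      by (rule zY) simp
    show ?thesis using r1 z by (auto simp: Vj_def Vr_def)
  qed
  have e1: "{1..<1 + Suc e} = {1..Suc e}" by auto
  have "(\<Sum>T\<in>Pow {1..<1 + Suc e}. \<Prod>j\<in>{1..<1 + Suc e}. ?M j (j \<in> T) (Suc j \<in> T))
      = tm ?M 1 (Suc e) False + tm ?M 1 (Suc e) True" by (rule tm_subsets)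
  also have "\<dots> = (\<Prod>i\<in>{1..<1 + Suc e}. ?s i) * (?V 1 False + ?V 1 True)"
    by (simp only: g distrib_left)
  also have "\<dots> = (1 + \<beta> * x (Suc e)) * YY \<beta> y (Suc e) 1 (Suc (m 1)) * (\<Prod>j\<in>{1..Suc e}. ?s j)"
    by (simp only: V1 e1 mult.commute)
  finally show ?thesis unfolding coefR_tm .
next
  case False
  then obtain j where j: "Suc (m j) < r j" by (auto simp: not_le)
  have j1: "1 \<le> j" using j ispf0[OF rP] by (cases j) auto
  have j2: "j \<le> Suc e" using j rD by (metis not_le not_less0 le_SucI)
  have jj: "\<not> r j \<le> m j" "\<not> r j - 1 \<le> m j" using j by auto
  have s0: "sg \<beta> x y (Suc e) m r j = 0" using jj by (simp add: sg_def sig_def tau_def)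
  have M0: "\<And>t t'. Mj \<beta> x y (Suc e) m r j t t' = 0" using j by (simp add: Mj_def Mr_def)
  have "(\<Prod>j\<in>{1..Suc e}. sg \<beta> x y (Suc e) m r j) = 0"
    using s0 j1 j2 by (intro prod_zero) auto
  moreover have "(\<Sum>T\<in>Pow {1..<1 + Suc e}. \<Prod>j\<in>{1..<1 + Suc e}. Mj \<beta> x y (Suc e) m r j (j \<in> T) (Suc j \<in> T)) = 0"
  proof (intro sum.neutral ballI prod_zero)
    fix T show "finite {1..<1 + Suc e}" by simp
    show "\<exists>a\<in>{1..<1 + Suc e}. Mj \<beta> x y (Suc e) m r a (a \<in> T) (Suc a \<in> T) = 0"
      using M0 j1 j2 by (intro bexI[of _ j]) auto
  qed
  ultimately show ?thesis unfolding coefR_tm by simp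
qed

lemma finite_IL: "finite {k. interlace m k}"
  using finite_interlace[OF mD] .

lemma rk_set: "{k. interlace m k \<and> rk k r} = subT r ` {S\<in>Pow (remS r). interlace m (subT r S)}"
proof
  show "{k. interlace m k \<and> rk k r} \<subseteq> subT r ` {S\<in>Pow (remS r). interlace m (subT r S)}"
  proof
    fix k assume k: "k \<in> {k. interlace m k \<and> rk k r}"
    hence il: "interlace m k" and "rk k r" by auto
    then obtain T where T: "T \<subseteq> addS k" "r = addT k T" by (auto simp: rk_def)
    have kP: "ispf k" using interlace_ispf[OF il mD] .
    note rs = rk_to_sub[OF kP T(1)]
    have "T \<subseteq> remS r" "k = subT r T" using rs T(2) by auto
    thus "k \<in> subT r ` {S\<in>Pow (remS r). interlace m (subT r S)}" using il by auto
  qed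
  show "subT r ` {S\<in>Pow (remS r). interlace m (subT r S)} \<subseteq> {k. interlace m k \<and> rk k r}"
  proof
    fix k assume "k \<in> subT r ` {S\<in>Pow (remS r). interlace m (subT r S)}"
    then obtain S where S: "S \<subseteq> remS r" "interlace m (subT r S)" "k = subT r S" by auto
    note sr = sub_to_rk[OF rP S(1)]
    have "rk k r" unfolding rk_def using sr S(3) by auto
    thus "k \<in> {k. interlace m k \<and> rk k r}" using S by auto
  qed
qed

lemma coefL_reindex:
  "(\<Sum>k\<in>{k. interlace m k}. (if rk k r then \<beta> ^ nd k r else 0) * A k)
    = (\<Sum>S\<in>Pow (remS r). if interlace m (subT r S) then \<beta> ^ card S * A (subT r S) else 0)"
proof -
  have "(\<Sum>k\<in>{k. interlace m k}. (if rk k r then \<beta> ^ nd k r else 0) * A k)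
      = (\<Sum>k\<in>{k. interlace m k}. if rk k r then \<beta> ^ nd k r * A k else 0)"
    by (intro sum.cong) auto
  also have "\<dots> = (\<Sum>k\<in>{k\<in>{k. interlace m k}. rk k r}. \<beta> ^ nd k r * A k)"
    by (rule sum.inter_filter[symmetric, OF finite_IL])
  also have "{k\<in>{k. interlace m k}. rk k r} = subT r ` {S\<in>Pow (remS r). interlace m (subT r S)}"
    using rk_set by simp
  also have "(\<Sum>k\<in>subT r ` {S\<in>Pow (remS r). interlace m (subT r S)}. \<beta> ^ nd k r * A k)
      = (\<Sum>S\<in>{S\<in>Pow (remS r). interlace m (subT r S)}. \<beta> ^ nd (subT r S) r * A (subT r S))"
  proof -
    have inj: "inj_on (subT r) {S\<in>Pow (remS r). interlace m (subT r S)}"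
      by (rule inj_on_subset[OF subT_inj[OF rP]]) auto
    show ?thesis using sum.reindex[OF inj, of "\<lambda>k. \<beta> ^ nd k r * A k"] by (simp add: comp_def)
  qed
  also have "\<dots> = (\<Sum>S\<in>{S\<in>Pow (remS r). interlace m (subT r S)}. \<beta> ^ card S * A (subT r S))"
    using nd_subT by (intro sum.cong) auto
  also have "\<dots> = (\<Sum>S\<in>Pow (remS r). if interlace m (subT r S) then \<beta> ^ card S * A (subT r S) else 0)"
  proof (rule sum.inter_filter)
    obtain L where "\<forall>i>L. r i = 0" using ispf_supp[OF rP] by blast
    thus "finite (Pow (remS r))" using remS_sub finite_subset by (metis finite_Pow_iff finite_atLeastAtMost)
  qed
  finally show ?thesis .
qed

lemma sum_to_prod:
  "(\<Sum>S\<in>Pow (remS r). \<beta> ^ card S * (\<Prod>j\<in>{1..Suc e}. tj \<beta> x y (Suc e) m j (subT r S j)))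
    = (\<Prod>j\<in>{1..Suc e}. sg \<beta> x y (Suc e) m r j)"
proof -
  let ?A = "{1..Suc e}" and ?R = "remS r"
  let ?t = "tj \<beta> x y (Suc e) m"
  let ?f1 = "\<lambda>j. if j \<in> ?R then \<beta> * ?t j (r j - 1) else 0" and ?f2 = "\<lambda>j. ?t j (r j)"
  have RA: "?R \<subseteq> ?A" using remS_sub[OF rD] by auto
  have sgj: "\<And>j. j \<in> ?A \<Longrightarrow> sg \<beta> x y (Suc e) m r j = ?f1 j + ?f2 j"
    by (simp add: sg_def sig_def tj_def remS_def)
  have "(\<Prod>j\<in>?A. sg \<beta> x y (Suc e) m r j) = (\<Prod>j\<in>?A. ?f1 j + ?f2 j)"
    using sgj by (rule prod.cong[OF refl])
  also have "\<dots> = (\<Sum>X\<in>Pow ?A. (\<Prod>j\<in>X. ?f1 j) * (\<Prod>j\<in>?A - X. ?f2 j))"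
    by (rule prod_add) simp
  also have "\<dots> = (\<Sum>X\<in>Pow ?R. (\<Prod>j\<in>X. ?f1 j) * (\<Prod>j\<in>?A - X. ?f2 j))"
  proof (rule sum.mono_neutral_right)
    show "finite (Pow ?A)" by simp
    show "Pow ?R \<subseteq> Pow ?A" using RA by auto
    show "\<forall>X\<in>Pow ?A - Pow ?R. (\<Prod>j\<in>X. ?f1 j) * (\<Prod>j\<in>?A - X. ?f2 j) = 0"
    proof
      fix X assume X: "X \<in> Pow ?A - Pow ?R"
      then obtain j where j: "j \<in> X" "j \<notin> ?R" by auto
      have "finite X" using X finite_subset by auto
      hence "(\<Prod>j\<in>X. ?f1 j) = 0" using j by (intro prod_zero) auto
      thus "(\<Prod>j\<in>X. ?f1 j) * (\<Prod>j\<in>?A - X. ?f2 j) = 0" by simp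
    qed
  qed
  also have "\<dots> = (\<Sum>S\<in>Pow ?R. \<beta> ^ card S * (\<Prod>j\<in>?A. ?t j (subT r S j)))"
  proof (intro sum.cong refl)
    fix X assume X: "X \<in> Pow ?R"
    hence XA: "X \<subseteq> ?A" using RA by auto
    have fX: "finite X" using XA finite_subset by auto
    have "(\<Prod>j\<in>X. ?f1 j) = (\<Prod>j\<in>X. \<beta> * ?t j (r j - 1))" using X by (intro prod.cong) auto
    also have "\<dots> = \<beta> ^ card X * (\<Prod>j\<in>X. ?t j (r j - 1))" by (simp add: prod.distrib)
    finally have a: "(\<Prod>j\<in>X. ?f1 j) = \<beta> ^ card X * (\<Prod>j\<in>X. ?t j (r j - 1))" .
    have "(\<Prod>j\<in>?A. ?t j (subT r X j)) = (\<Prod>j\<in>?A - X. ?t j (subT r X j)) * (\<Prod>j\<in>X. ?t j (subT r X j))"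
      by (rule prod.subset_diff[OF XA]) simp
    also have "(\<Prod>j\<in>?A - X. ?t j (subT r X j)) = (\<Prod>j\<in>?A - X. ?f2 j)" by (intro prod.cong) (auto simp: subT_def)
    also have "(\<Prod>j\<in>X. ?t j (subT r X j)) = (\<Prod>j\<in>X. ?t j (r j - 1))" by (intro prod.cong) (auto simp: subT_def)
    finally have b: "(\<Prod>j\<in>?A. ?t j (subT r X j)) = (\<Prod>j\<in>?A - X. ?f2 j) * (\<Prod>j\<in>X. ?t j (r j - 1))" .
    show "(\<Prod>j\<in>X. ?f1 j) * (\<Prod>j\<in>?A - X. ?f2 j) = \<beta> ^ card X * (\<Prod>j\<in>?A. ?t j (subT r X j))"
      unfolding a b by (simp add: ac_simps)
  qed
  finally show ?thesis by simp
qed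

lemma not_il_prod:
  assumes k0: "k 0 = 0" and kD: "\<forall>j>e. k j = 0" and nil: "\<not> interlace m k"
  shows "(\<Prod>j\<in>{1..Suc e}. tj \<beta> x y (Suc e) m j (k j)) = 0"
proof -
  obtain i where i: "1 \<le> i" "\<not> (m (Suc i) \<le> k i \<and> k i \<le> m i)"
    using nil k0 unfolding interlace_def by blast
  have "i \<le> Suc e"
  proof (rule ccontr)
    assume "\<not> i \<le> Suc e"
    hence "m (Suc i) = 0" "m i = 0" "k i = 0" using mD kD by auto
    thus False using i by simp
  qed
  moreover have "tj \<beta> x y (Suc e) m i (k i) = 0" unfolding tj_def tau_def by (rule if_not_P[OF i(2)])
  ultimately show ?thesis using i by (intro prod_zero) auto
qed

lemma telescope:
  assumes yne: "\<forall>k\<ge>1. 1 + \<beta> * y k \<noteq> 0" and k0: "k 0 = 0" and kD: "\<forall>j>e. k j = 0"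
    and il: "interlace m k"
  shows "(1 + \<beta> * x (Suc e)) * cfac \<beta> y (Suc e) m * Wf \<beta> x y (Suc e) m k / cfac \<beta> y e k
    = (1 + \<beta> * x (Suc e)) * YY \<beta> y (Suc e) 1 (Suc (m 1)) * (\<Prod>j\<in>{1..Suc e}. tj \<beta> x y (Suc e) m j (k j))"
proof -
  let ?d = "Suc e" and ?Q = "1 + \<beta> * x (Suc e)"
  let ?Y = "YY \<beta> y ?d"
  let ?w = "\<lambda>i. wrow \<beta> x y ?d i (m i) (k i) (m (Suc i))"
  let ?t = "\<lambda>i. tj \<beta> x y ?d m i (k i)"
  have ilf: "\<And>i. 1 \<le> i \<Longrightarrow> m (Suc i) \<le> k i \<and> k i \<le> m i" using il unfolding interlace_def by blast
  have ar1: "\<And>i. i \<le> Suc e \<Longrightarrow> m i + Suc e - i + 1 = Suc (m i) + Suc e - i" by arith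
  have ar2: "\<And>i. i \<le> e \<Longrightarrow> k i + e - i + 1 = k i + Suc e - i" by arith
  have c1: "cfac \<beta> y ?d m = (\<Prod>i\<in>{1..?d}. ?Y i (Suc (m i)))"
    unfolding cfac_def YY_def using ar1 by (intro prod.cong refl) simp
  have c2: "cfac \<beta> y e k = (\<Prod>i\<in>{1..e}. ?Y i (k i))"
    unfolding cfac_def YY_def using ar2 by (intro prod.cong refl) simp
  have c3: "(\<Prod>i\<in>{1..?d}. ?Y i (Suc (m i))) = ?Y 1 (Suc (m 1)) * (\<Prod>i\<in>{1..e}. ?Y i (m (Suc i)))"
  proof -
    have "(\<Prod>i\<in>{1..?d}. ?Y i (Suc (m i))) = ?Y 1 (Suc (m 1)) * (\<Prod>i\<in>{Suc 1..Suc e}. ?Y i (Suc (m i)))"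
      by (rule prod.atLeast_Suc_atMost) simp
    also have "(\<Prod>i\<in>{Suc 1..Suc e}. ?Y i (Suc (m i))) = (\<Prod>i\<in>{1..e}. ?Y (Suc i) (Suc (m (Suc i))))"
      by (rule prod.shift_bounds_cl_Suc_ivl)
    also have "\<dots> = (\<Prod>i\<in>{1..e}. ?Y i (m (Suc i)))" by (simp add: YY_shift)
    finally show ?thesis .
  qed
  have c4: "Wf \<beta> x y ?d m k = (\<Prod>i\<in>{1..e}. ?w i) * ?w ?d"
    unfolding Wf_def by simp
  have c4': "(\<Prod>i\<in>{1..?d}. ?t i) = (\<Prod>i\<in>{1..e}. ?t i) * ?t ?d" by simp
  have c5: "\<And>i. i \<in> {1..e} \<Longrightarrow> ?Y i (m (Suc i)) * ?w i / ?Y i (k i) = ?t i"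
  proof -
    fix i assume i: "i \<in> {1..e}"
    have nz: "?Y i (k i) \<noteq> 0" using yne i unfolding YY_def by auto
    have b: "m (Suc i) \<le> k i" "k i \<le> m i" using ilf[of i] i by auto
    have z: "1 + \<beta> * zz \<beta> x y ?d i (k i) = ?Q * ?Y i (k i)" by (rule zY) (use i in auto)
    show "?Y i (m (Suc i)) * ?w i / ?Y i (k i) = ?t i"
    proof (cases "m (Suc i) < k i")
      case True
      thus ?thesis using b nz z by (simp add: wrow_def tj_def tau_def zz_def[symmetric])
    next
      case False
      hence "m (Suc i) = k i" using b by simp
      thus ?thesis using b nz by (simp add: wrow_def tj_def tau_def zz_def[symmetric])
    qed
  qed
  have c6: "?w ?d = ?t ?d"
  proof -
    have "k ?d = 0" "m (Suc ?d) = 0" using kD mD by auto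
    thus ?thesis by (simp add: wrow_def tj_def tau_def zz_def)
  qed
  have "?Q * cfac \<beta> y ?d m * Wf \<beta> x y ?d m k / cfac \<beta> y e k
      = ?Q * ?Y 1 (Suc (m 1)) * ((\<Prod>i\<in>{1..e}. ?Y i (m (Suc i))) * (\<Prod>i\<in>{1..e}. ?w i) / (\<Prod>i\<in>{1..e}. ?Y i (k i))) * ?w ?d"
    unfolding c1 c2 c3 c4 by (simp add: ac_simps)
  also have "(\<Prod>i\<in>{1..e}. ?Y i (m (Suc i))) * (\<Prod>i\<in>{1..e}. ?w i) / (\<Prod>i\<in>{1..e}. ?Y i (k i))
      = (\<Prod>i\<in>{1..e}. ?Y i (m (Suc i)) * ?w i / ?Y i (k i))"
    by (simp add: prod.distrib prod_dividef)
  also have "\<dots> = (\<Prod>i\<in>{1..e}. ?t i)" using c5 by (rule prod.cong[OF refl])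
  finally show ?thesis unfolding c4' c6 by (simp add: ac_simps)
qed

lemma local_identity:
  assumes yne: "\<forall>k\<ge>1. 1 + \<beta> * y k \<noteq> 0"
  shows "(\<Sum>k\<in>{k. interlace m k}. (if rk k r then \<beta> ^ nd k r else 0) *
      ((1 + \<beta> * x (Suc e)) * cfac \<beta> y (Suc e) m * Wf \<beta> x y (Suc e) m k / cfac \<beta> y e k))
    = (\<Sum>T\<in>Pow (addS m \<inter> {1..Suc e}). \<beta> ^ card T * (if interlace (addT m T) r then Wf \<beta> x y (Suc e) (addT m T) r else 0))"
proof -
  let ?Q = "1 + \<beta> * x (Suc e)"
  let ?A = "\<lambda>k. ?Q * cfac \<beta> y (Suc e) m * Wf \<beta> x y (Suc e) m k / cfac \<beta> y e k"
  let ?C = "?Q * YY \<beta> y (Suc e) 1 (Suc (m 1))"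
  let ?t = "tj \<beta> x y (Suc e) m"
  have "(\<Sum>k\<in>{k. interlace m k}. (if rk k r then \<beta> ^ nd k r else 0) * ?A k)
     = (\<Sum>S\<in>Pow (remS r). if interlace m (subT r S) then \<beta> ^ card S * ?A (subT r S) else 0)"
    by (rule coefL_reindex)
  also have "\<dots> = (\<Sum>S\<in>Pow (remS r). \<beta> ^ card S * (?C * (\<Prod>j\<in>{1..Suc e}. ?t j (subT r S j))))"
  proof (intro sum.cong refl)
    fix S assume S: "S \<in> Pow (remS r)"
    have k0: "subT r S 0 = 0" using S ispf0[OF rP] by (auto simp: subT_def remS_def)
    have kD: "\<forall>j>e. subT r S j = 0" using rD by (auto simp: subT_def)
    show "(if interlace m (subT r S) then \<beta> ^ card S * ?A (subT r S) else 0) = \<beta> ^ card S * (?C * (\<Prod>j\<in>{1..Suc e}. ?t j (subT r S j)))"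
    proof (cases "interlace m (subT r S)")
      case True
      thus ?thesis using telescope[OF yne k0 kD True] by simp
    next
      case False
      thus ?thesis using not_il_prod[OF k0 kD False] by simp
    qed
  qed
  also have "\<dots> = ?C * (\<Sum>S\<in>Pow (remS r). \<beta> ^ card S * (\<Prod>j\<in>{1..Suc e}. ?t j (subT r S j)))"
    by (simp add: sum_distrib_left ac_simps)
  also have "\<dots> = ?C * (\<Prod>j\<in>{1..Suc e}. sg \<beta> x y (Suc e) m r j)" unfolding sum_to_prod ..
  also have "\<dots> = (\<Sum>T\<in>Pow (addS m \<inter> {1..Suc e}). \<beta> ^ card T * (if interlace (addT m T) r then Wf \<beta> x y (Suc e) (addT m T) r else 0))"
    unfolding coefR_val ..
  finally show ?thesis .
qed

end

definition Pfac :: "'a::field \<Rightarrow> (nat \<Rightarrow> 'a) \<Rightarrow> nat \<Rightarrow> 'a" where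
  "Pfac \<beta> x d = (\<Prod>i\<in>{1..d}. 1 + \<beta> * x i)"

lemma cellsf_empty_iff: assumes "ispf m" shows "cellsf m = {} \<longleftrightarrow> m 1 = 0"
proof
  assume "cellsf m = {}"
  hence "(1, 1) \<notin> cellsf m" by simp
  thus "m 1 = 0" by (simp add: cellsf_def)
next
  assume a: "m 1 = 0"
  show "cellsf m = {}"
  proof (rule ccontr)
    assume "cellsf m \<noteq> {}"
    then obtain i j where ij: "1 \<le> i" "1 \<le> j" "j \<le> m i" by (auto simp: cellsf_def)
    have "m i \<le> m 1" using ispfM[OF assms, of 1 i] ij by simp
    thus False using a ij by simp
  qed
qed

lemma addS_zero: assumes "ispf m" "m 1 = 0" shows "addS m = {1}"
proof -
  have z1: "\<And>i. 1 \<le> i \<Longrightarrow> m i = 0" using ispfM[OF assms(1), of 1] assms(2) by fastforce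
  have z: "\<And>i. m i = 0"
  proof -
    fix i show "m i = 0" using z1[of i] ispf0[OF assms(1)] by (cases i) auto
  qed
  show ?thesis unfolding addS_def using z by auto
qed

lemma pieri_base:
  assumes m: "ispf m"
  shows "Pfac \<beta> x 0 * cfac \<beta> y 0 m * Gc \<beta> 0 (cellsf m) x y =
    (\<Sum>T\<in>Pow (addS m). \<beta> ^ card T * Gc \<beta> 0 (cellsf (addT m T)) x y)"
proof (cases "m 1 = 0")
  case True
  have A: "addS m = {1}" using addS_zero[OF m True] .
  have P: "Pow {1::nat} = {{}, {1}}" by auto
  have c1: "cellsf m = {}" using cellsf_empty_iff[OF m] True by simp
  have c2: "cellsf (addT m {1}) \<noteq> {}"
  proof -
    have "(1, 1) \<in> cellsf (addT m {1})" by (simp add: cellsf_def addT_def)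
    thus ?thesis by blast
  qed
  have e: "addT m {} = m" by (simp add: addT_def)
  show ?thesis unfolding A P using c1 c2 e by (simp add: Gc_zero Pfac_def cfac_def)
next
  case False
  have c1: "cellsf m \<noteq> {}" using cellsf_empty_iff[OF m] False by simp
  have c2: "\<And>T. cellsf (addT m T) \<noteq> {}"
  proof -
    fix T
    have "(1, 1) \<in> cellsf (addT m T)" using False by (simp add: cellsf_def addT_def)
    thus "cellsf (addT m T) \<noteq> {}" by blast
  qed
  show ?thesis using c1 c2 by (simp add: Gc_zero)
qed

definition Bx :: "nat \<Rightarrow> nat \<Rightarrow> (nat \<Rightarrow> nat) set" where
  "Bx L N = {r. \<forall>i. r i \<le> (if i \<le> L then N else 0)}"

lemma finite_Bx: "finite (Bx L N)"
  unfolding Bx_def by (rule finite_bounded_funs[of L]) simp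

lemma conv_a:
  fixes \<beta> :: "'a::field" and h :: "(nat \<Rightarrow> nat) \<Rightarrow> 'a"
  assumes k: "ispf k" and kb: "\<forall>i. k i \<le> m i" and mP: "ispf m" and mD: "\<forall>i>Suc e. m i = 0"
  shows "(\<Sum>T\<in>Pow (addS k). \<beta> ^ card T * h (addT k T)) =
     (\<Sum>r\<in>Bx (Suc (Suc e)) (Suc (m 1)). (if rk k r then \<beta> ^ nd k r else 0) * h r)"
proof -
  let ?B = "Bx (Suc (Suc e)) (Suc (m 1))"
  have kD: "\<forall>i>Suc e. k i = 0"
  proof (intro allI impI)
    fix i assume "i > Suc e"
    hence "m i = 0" using mD by simp
    thus "k i = 0" using kb[rule_format, of i] by simp
  qed
  have AS: "addS k \<subseteq> {1..Suc (Suc e)}" by (rule addS_sub[OF kD])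
  have img: "addT k ` Pow (addS k) \<subseteq> ?B"
  proof
    fix r assume "r \<in> addT k ` Pow (addS k)"
    then obtain T where T: "T \<subseteq> addS k" "r = addT k T" by auto
    show "r \<in> ?B" unfolding Bx_def
    proof (intro CollectI allI)
      fix i
      show "r i \<le> (if i \<le> Suc (Suc e) then Suc (m 1) else 0)"
      proof (cases "i = 0")
        case True
        have "0 \<notin> T" using T(1) by (auto simp: addS_def)
        thus ?thesis using True T(2) ispf0[OF k] by (simp add: addT_def)
      next
        case False
        show ?thesis
        proof (cases "i \<le> Suc (Suc e)")
          case True
          have "m i \<le> m 1" using ispfM[OF mP, of 1 i] False by simp
          hence "k i \<le> m 1" using kb[rule_format, of i] by linarith
          thus ?thesis using True T(2) by (simp add: addT_def)
        next
          case False2: False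
          have "i \<notin> T" using T(1) AS False2 by auto
          thus ?thesis using False2 T(2) kD by (simp add: addT_def)
        qed
      qed
    qed
  qed
  have "(\<Sum>r\<in>?B. (if rk k r then \<beta> ^ nd k r else 0) * h r) = (\<Sum>r\<in>?B. if rk k r then \<beta> ^ nd k r * h r else 0)"
    by (intro sum.cong) auto
  also have "\<dots> = (\<Sum>r\<in>{r\<in>?B. rk k r}. \<beta> ^ nd k r * h r)"
    by (rule sum.inter_filter[symmetric, OF finite_Bx])
  also have "{r\<in>?B. rk k r} = addT k ` Pow (addS k)"
    using img unfolding rk_def by auto
  also have "(\<Sum>r\<in>addT k ` Pow (addS k). \<beta> ^ nd k r * h r) = (\<Sum>T\<in>Pow (addS k). \<beta> ^ nd k (addT k T) * h (addT k T))"
    using sum.reindex[OF addT_inj, of "\<lambda>r. \<beta> ^ nd k r * h r" k "Pow (addS k)"] by (simp add: comp_def)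
  also have "\<dots> = (\<Sum>T\<in>Pow (addS k). \<beta> ^ card T * h (addT k T))" by (simp add: nd_addT)
  finally show ?thesis by simp
qed

lemma il_Bx:
  assumes mP: "ispf m" and mD: "\<forall>i>Suc e. m i = 0" and T: "T \<subseteq> {1..Suc e}"
  shows "{r. interlace (addT m T) r} \<subseteq> Bx (Suc (Suc e)) (Suc (m 1))"
proof
  fix r assume "r \<in> {r. interlace (addT m T) r}"
  hence il: "interlace (addT m T) r" by simp
  note F = interlace_facts[OF il]
  show "r \<in> Bx (Suc (Suc e)) (Suc (m 1))" unfolding Bx_def
  proof (intro CollectI allI)
    fix i
    show "r i \<le> (if i \<le> Suc (Suc e) then Suc (m 1) else 0)"
    proof (cases "i = 0")
      case True thus ?thesis using F(1) by simp
    next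
      case False
      hence i1: "1 \<le> i" by simp
      have a: "r i \<le> m i + (if i \<in> T then 1 else 0)" using F(3)[OF i1] by (simp add: addT_def)
      show ?thesis
      proof (cases "i \<le> Suc e")
        case True
        have "m i \<le> m 1" using ispfM[OF mP, of 1 i] i1 by simp
        moreover have "r i \<le> m i + 1" using a by (simp split: if_splits)
        ultimately show ?thesis using True by simp
      next
        case False2: False
        have "i \<notin> T" "m i = 0" using T mD False2 by auto
        thus ?thesis using a by simp
      qed
    qed
  qed
qed

lemma cfac_nz:
  fixes \<beta> :: "'a::field"
  assumes yne: "\<forall>k\<ge>1. 1 + \<beta> * y k \<noteq> 0"
  shows "cfac \<beta> y e k \<noteq> 0"
  unfolding cfac_def using yne by (subst prod_zero_iff) auto

lemma pieri_step:
  fixes \<beta> :: "'a::field"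
  assumes yne: "\<forall>k\<ge>1. 1 + \<beta> * y k \<noteq> 0"
    and IH: "\<And>k. ispf k \<Longrightarrow> Pfac \<beta> x e * cfac \<beta> y e k * Gc \<beta> e (cellsf k) x y =
       (\<Sum>T\<in>Pow (addS k). \<beta> ^ card T * Gc \<beta> e (cellsf (addT k T)) x y)"
    and mP: "ispf m"
  shows "Pfac \<beta> x (Suc e) * cfac \<beta> y (Suc e) m * Gc \<beta> (Suc e) (cellsf m) x y =
       (\<Sum>T\<in>Pow (addS m). \<beta> ^ card T * Gc \<beta> (Suc e) (cellsf (addT m T)) x y)"
proof (cases "\<exists>i>Suc e. m i \<noteq> 0")
  case True
  then obtain i where i: "i > Suc e" "m i \<noteq> 0" by blast
  have L: "Gc \<beta> (Suc e) (cellsf m) x y = 0" using Gc_vanish[OF mP i] .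
  have "\<And>T. T \<in> Pow (addS m) \<Longrightarrow> Gc \<beta> (Suc e) (cellsf (addT m T)) x y = 0"
  proof -
    fix T assume "T \<in> Pow (addS m)"
    hence P: "ispf (addT m T)" using addT_ispf[OF mP] by auto
    have "addT m T i \<noteq> 0" using i by (simp add: addT_def)
    thus "Gc \<beta> (Suc e) (cellsf (addT m T)) x y = 0" using Gc_vanish[OF P i(1)] by simp
  qed
  thus ?thesis using L by simp
next
  case False
  hence mD: "\<forall>i>Suc e. m i = 0" by simp
  let ?G = "\<lambda>r. Gc \<beta> e (cellsf r) x y"
  let ?B = "Bx (Suc (Suc e)) (Suc (m 1))"
  let ?Q = "1 + \<beta> * x (Suc e)"
  let ?IL = "{k. interlace m k}"
  let ?A = "\<lambda>k. ?Q * cfac \<beta> y (Suc e) m * Wf \<beta> x y (Suc e) m k / cfac \<beta> y e k"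
  let ?cL = "\<lambda>r. \<Sum>k\<in>?IL. (if rk k r then \<beta> ^ nd k r else 0) * ?A k"
  let ?cR = "\<lambda>r. \<Sum>T\<in>Pow (addS m \<inter> {1..Suc e}). \<beta> ^ card T * (if interlace (addT m T) r then Wf \<beta> x y (Suc e) (addT m T) r else 0)"
  have fIL: "finite ?IL" using finite_interlace[OF mD] .
  have kprops: "\<And>k. k \<in> ?IL \<Longrightarrow> ispf k \<and> (\<forall>i. k i \<le> m i)"
  proof -
    fix k assume "k \<in> ?IL"
    hence il: "interlace m k" by simp
    note F = interlace_facts[OF il]
    have "\<forall>i. k i \<le> m i"
    proof
      fix i show "k i \<le> m i" using F(1) F(3)[of i] by (cases i) auto
    qed
    thus "ispf k \<and> (\<forall>i. k i \<le> m i)" using interlace_ispf[OF il mD] by simp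
  qed
  have Pf: "Pfac \<beta> x (Suc e) = Pfac \<beta> x e * ?Q" by (simp add: Pfac_def)
  have "Pfac \<beta> x (Suc e) * cfac \<beta> y (Suc e) m * Gc \<beta> (Suc e) (cellsf m) x y
      = Pfac \<beta> x (Suc e) * cfac \<beta> y (Suc e) m * (\<Sum>k\<in>?IL. ?G k * Wf \<beta> x y (Suc e) m k)"
    unfolding branching_fun[OF mP mD refl] Wf_def ..
  also have "\<dots> = (\<Sum>k\<in>?IL. ?A k * (Pfac \<beta> x e * cfac \<beta> y e k * ?G k))"
    unfolding sum_distrib_left
  proof (intro sum.cong refl)
    fix k assume "k \<in> ?IL"
    have nz: "cfac \<beta> y e k \<noteq> 0" by (rule cfac_nz[OF yne])
    show "Pfac \<beta> x (Suc e) * cfac \<beta> y (Suc e) m * (?G k * Wf \<beta> x y (Suc e) m k) = ?A k * (Pfac \<beta> x e * cfac \<beta> y e k * ?G k)"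
      using nz unfolding Pf by (simp add: field_simps)
  qed
  also have "\<dots> = (\<Sum>k\<in>?IL. ?A k * (\<Sum>r\<in>?B. (if rk k r then \<beta> ^ nd k r else 0) * ?G r))"
  proof (intro sum.cong refl)
    fix k assume k: "k \<in> ?IL"
    have kP: "ispf k" and kb: "\<forall>i. k i \<le> m i" using kprops[OF k] by auto
    show "?A k * (Pfac \<beta> x e * cfac \<beta> y e k * ?G k) = ?A k * (\<Sum>r\<in>?B. (if rk k r then \<beta> ^ nd k r else 0) * ?G r)"
      unfolding IH[OF kP] conv_a[OF kP kb mP mD, of \<beta> ?G] ..
  qed
  also have "\<dots> = (\<Sum>r\<in>?B. ?G r * ?cL r)"
    unfolding sum_distrib_left sum_distrib_right
    by (subst sum.swap) (simp add: ac_simps)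
  finally have LHS: "Pfac \<beta> x (Suc e) * cfac \<beta> y (Suc e) m * Gc \<beta> (Suc e) (cellsf m) x y = (\<Sum>r\<in>?B. ?G r * ?cL r)" .
  have "(\<Sum>T\<in>Pow (addS m). \<beta> ^ card T * Gc \<beta> (Suc e) (cellsf (addT m T)) x y)
      = (\<Sum>T\<in>Pow (addS m \<inter> {1..Suc e}). \<beta> ^ card T * Gc \<beta> (Suc e) (cellsf (addT m T)) x y)"
  proof (rule sum.mono_neutral_right)
    show "finite (Pow (addS m))" using finite_addS[OF mP] by simp
    show "Pow (addS m \<inter> {1..Suc e}) \<subseteq> Pow (addS m)" by auto
    show "\<forall>T\<in>Pow (addS m) - Pow (addS m \<inter> {1..Suc e}). \<beta> ^ card T * Gc \<beta> (Suc e) (cellsf (addT m T)) x y = 0"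
    proof
      fix T assume T: "T \<in> Pow (addS m) - Pow (addS m \<inter> {1..Suc e})"
      have TT: "T \<subseteq> addS m" "\<not> T \<subseteq> addS m \<inter> {1..Suc e}" using T by auto
      then obtain i where i: "i \<in> T" "i \<notin> {1..Suc e}" by blast
      have "i \<in> addS m" using T i by auto
      hence "1 \<le> i" by (simp add: addS_def)
      hence i2: "i > Suc e" using i by auto
      have P: "ispf (addT m T)" using addT_ispf[OF mP] T by auto
      have nz: "addT m T i \<noteq> 0" using i by (simp add: addT_def)
      have "Gc \<beta> (Suc e) (cellsf (addT m T)) x y = 0" by (rule Gc_vanish[OF P i2 nz])
      thus "\<beta> ^ card T * Gc \<beta> (Suc e) (cellsf (addT m T)) x y = 0" by simp
    qed
  qed
  also have "\<dots> = (\<Sum>T\<in>Pow (addS m \<inter> {1..Suc e}). \<beta> ^ card T *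
       (\<Sum>r\<in>?B. (if interlace (addT m T) r then Wf \<beta> x y (Suc e) (addT m T) r else 0) * ?G r))"
  proof (intro sum.cong refl)
    fix T assume T: "T \<in> Pow (addS m \<inter> {1..Suc e})"
    let ?n = "addT m T"
    have nP: "ispf ?n" using addT_ispf[OF mP] T by auto
    have nD: "\<forall>i>Suc e. ?n i = 0" using mD T by (auto simp: addT_def)
    have sub: "{r. interlace ?n r} \<subseteq> ?B" using il_Bx[OF mP mD] T by auto
    have "Gc \<beta> (Suc e) (cellsf ?n) x y = (\<Sum>r\<in>{r. interlace ?n r}. ?G r * Wf \<beta> x y (Suc e) ?n r)"
      unfolding branching_fun[OF nP nD refl] Wf_def ..
    also have "\<dots> = (\<Sum>r\<in>{r\<in>?B. interlace ?n r}. ?G r * Wf \<beta> x y (Suc e) ?n r)"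
      using sub by (intro sum.cong) auto
    also have "\<dots> = (\<Sum>r\<in>?B. if interlace ?n r then ?G r * Wf \<beta> x y (Suc e) ?n r else 0)"
      by (rule sum.inter_filter[OF finite_Bx])
    also have "\<dots> = (\<Sum>r\<in>?B. (if interlace ?n r then Wf \<beta> x y (Suc e) ?n r else 0) * ?G r)"
      by (intro sum.cong) auto
    finally show "\<beta> ^ card T * Gc \<beta> (Suc e) (cellsf ?n) x y = \<beta> ^ card T *
       (\<Sum>r\<in>?B. (if interlace ?n r then Wf \<beta> x y (Suc e) ?n r else 0) * ?G r)" by simp
  qed
  also have "\<dots> = (\<Sum>r\<in>?B. ?G r * ?cR r)"
    unfolding sum_distrib_left sum_distrib_right
    by (subst sum.swap) (simp add: ac_simps)
  finally have RHS: "(\<Sum>T\<in>Pow (addS m). \<beta> ^ card T * Gc \<beta> (Suc e) (cellsf (addT m T)) x y) = (\<Sum>r\<in>?B. ?G r * ?cR r)" .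
  have coef: "\<And>r. r \<in> ?B \<Longrightarrow> ?G r * ?cL r = ?G r * ?cR r"
  proof -
    fix r assume "r \<in> ?B"
    show "?G r * ?cL r = ?G r * ?cR r"
    proof (cases "ispf r")
      case rP: True
      show ?thesis
      proof (cases "\<forall>i>e. r i = 0")
        case True
        have "?cL r = ?cR r" by (rule local_identity[OF mP mD rP True yne])
        thus ?thesis by simp
      next
        case False
        then obtain i where "i > e" "r i \<noteq> 0" by auto
        hence "?G r = 0" using Gc_vanish[OF rP] by blast
        thus ?thesis by simp
      qed
    next
      case False
      have "?cL r = 0"
      proof (intro sum.neutral ballI)
        fix k assume k: "k \<in> ?IL"
        have "\<not> rk k r"
        proof
          assume "rk k r"
          then obtain T where "T \<subseteq> addS k" "r = addT k T" by (auto simp: rk_def)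
          thus False using addT_ispf kprops[OF k] False by blast
        qed
        thus "(if rk k r then \<beta> ^ nd k r else 0) * ?A k = 0" by simp
      qed
      moreover have "?cR r = 0"
      proof (intro sum.neutral ballI)
        fix T assume T: "T \<in> Pow (addS m \<inter> {1..Suc e})"
        have nD: "\<forall>i>Suc e. addT m T i = 0" using mD T by (auto simp: addT_def)
        have "\<not> interlace (addT m T) r" using interlace_ispf[OF _ nD] False by blast
        thus "\<beta> ^ card T * (if interlace (addT m T) r then Wf \<beta> x y (Suc e) (addT m T) r else 0) = 0" by simp
      qed
      ultimately show ?thesis by simp
    qed
  qed
  show ?thesis unfolding LHS RHS using coef by (rule sum.cong[OF refl])
qed

theorem pieri_fun:
  fixes \<beta> :: "'a::field"
  assumes yne: "\<forall>k\<ge>1. 1 + \<beta> * y k \<noteq> 0"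
  shows "ispf m \<Longrightarrow> Pfac \<beta> x d * cfac \<beta> y d m * Gc \<beta> d (cellsf m) x y =
       (\<Sum>T\<in>Pow (addS m). \<beta> ^ card T * Gc \<beta> d (cellsf (addT m T)) x y)"
proof (induction d arbitrary: m)
  case 0 thus ?case by (rule pieri_base)
next
  case (Suc e)
  show ?case by (rule pieri_step[OF yne Suc.IH Suc.prems])
qed

lemma cells_cellsf: "cells la = cellsf (part la)"
  unfolding cells_def cellsf_def part_def by (auto split: if_splits)

lemma card_cells: "card (cells la) = sum_list la"
proof -
  have "cells la = Sigma {1..length la} (\<lambda>i. {1..part la i})"
    unfolding cells_def by auto
  hence "card (cells la) = (\<Sum>i\<in>{1..length la}. part la i)"
    by (simp add: card_SigmaI)
  also have "\<dots> = (\<Sum>i\<in>{1..length la}. la ! (i - 1))"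
    by (intro sum.cong refl) (auto simp: part_def)
  also have "\<dots> = (\<Sum>i<length la. la ! i)"
  proof -
    have "(\<Sum>i<length la. la ! i) = (\<Sum>i\<in>{1..length la}. la ! (i - 1))"
      by (rule sum.reindex_bij_witness[where i="\<lambda>i. i - 1" and j="\<lambda>i. Suc i"]) auto
    thus ?thesis by simp
  qed
  also have "\<dots> = sum_list la" by (simp add: sum_list_sum_nth atLeast0LessThan)
  finally show ?thesis .
qed

lemma G_Gc: "G \<beta> d la x y = Gc \<beta> d (cellsf (part la)) x y"
proof -
  have "G \<beta> d la x y = Gc \<beta> d (cells la) x y"
    unfolding G_def Gc_def wT_def hh_def SSVT_def SSVTc_def ne_def psize_def card_cells ..
  thus ?thesis unfolding cells_cellsf .
qed

lemma psize_card: "psize la = card (cellsf (part la))"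
  unfolding psize_def card_cells[symmetric] cells_cellsf ..

lemma part_ispf:
  assumes "is_partition la" shows "ispf (part la)"
  unfolding ispf_def
proof (intro conjI allI impI)
  show "part la 0 = 0" by (simp add: part_def)
  show "\<exists>L. \<forall>i>L. part la i = 0" by (rule exI[of _ "length la"]) (simp add: part_def)
  fix i j :: nat assume ij: "1 \<le> i" "i \<le> j"
  show "part la j \<le> part la i"
  proof (cases "j \<le> length la")
    case True
    have s: "sorted_wrt (\<ge>) la" using assms by (simp add: is_partition_def)
    show ?thesis
    proof (cases "i = j")
      case False
      hence "i - 1 < j - 1" using ij by simp
      moreover have "j - 1 < length la" using True ij by simp
      ultimately have "la ! (j - 1) \<le> la ! (i - 1)" using s by (simp add: sorted_wrt_iff_nth_less)
      thus ?thesis using True ij by (simp add: part_def)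
    qed simp
  next
    case False thus ?thesis by (simp add: part_def)
  qed
qed

lemma part_pos: "is_partition la \<Longrightarrow> 1 \<le> i \<Longrightarrow> i \<le> length la \<Longrightarrow> 0 < part la i"
  unfolding is_partition_def part_def by (auto simp: in_set_conv_nth)

lemma part_inj:
  assumes "is_partition l1" "is_partition l2" "part l1 = part l2"
  shows "l1 = l2"
proof -
  have len: "length l1 = length l2"
  proof (rule ccontr)
    assume ne: "length l1 \<noteq> length l2"
    show False
    proof (cases "length l1 < length l2")
      case True
      hence "0 < part l2 (length l2)" using part_pos[OF assms(2)] by simp
      moreover have "part l1 (length l2) = 0" using True by (simp add: part_def)
      ultimately show False using assms(3) by simp
    next
      case False
      hence "length l2 < length l1" using ne by simp
      hence "0 < part l1 (length l1)" using part_pos[OF assms(1)] by simp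
      moreover have "part l2 (length l1) = 0" using \<open>length l2 < length l1\<close> by (simp add: part_def)
      ultimately show False using assms(3) by simp
    qed
  qed
  show ?thesis
  proof (rule nth_equalityI[OF len])
    fix i assume i: "i < length l1"
    have "part l1 (Suc i) = part l2 (Suc i)" using assms(3) by simp
    thus "l1 ! i = l2 ! i" using i len by (simp add: part_def)
  qed
qed

lemma ispf_to_list:
  assumes f: "ispf f" shows "\<exists>nu. is_partition nu \<and> part nu = f"
proof -
  obtain L where L: "\<forall>i>L. f i = 0" using f by (auto simp: ispf_def)
  let ?J = "{i. 1 \<le> i \<and> 0 < f i}"
  have JL: "?J \<subseteq> {1..L}"
  proof
    fix i assume i: "i \<in> ?J"
    have "i \<le> L"
    proof (rule ccontr)
      assume "\<not> i \<le> L" hence "f i = 0" using L by simp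
      thus False using i by simp
    qed
    thus "i \<in> {1..L}" using i by simp
  qed
  have fJ: "finite ?J" using JL finite_subset by blast
  have J: "?J = {1..card ?J}"
  proof (rule prefix_card[OF fJ])
    show "0 \<notin> ?J" by simp
    fix j j' assume a: "j \<in> ?J" "1 \<le> j'" "j' \<le> j"
    have "f j \<le> f j'" using ispfM[OF f a(2,3)] .
    thus "j' \<in> ?J" using a by auto
  qed
  let ?l = "card ?J"
  define nu where "nu = map f [1..<Suc ?l]"
  have len: "length nu = ?l" unfolding nu_def by (simp del: upt_Suc)
  have nth: "\<And>k. k < ?l \<Longrightarrow> nu ! k = f (Suc k)" unfolding nu_def by (simp add: nth_map del: upt_Suc)
  have pos: "\<And>i. 1 \<le> i \<Longrightarrow> i \<le> ?l \<Longrightarrow> 0 < f i"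
  proof -
    fix i :: nat assume "1 \<le> i" "i \<le> ?l"
    hence "i \<in> {1..?l}" by simp
    hence "i \<in> ?J" using J by blast
    thus "0 < f i" by simp
  qed
  have part_eq: "part nu = f"
  proof
    fix i
    show "part nu i = f i"
    proof (cases "1 \<le> i \<and> i \<le> ?l")
      case True
      have "i - 1 < ?l" using True by arith
      thus ?thesis using nth[of "i - 1"] True len by (simp add: part_def)
    next
      case False
      show ?thesis
      proof (cases "i = 0")
        case True thus ?thesis using ispf0[OF f] by (simp add: part_def)
      next
        case False2: False
        hence "i \<notin> {1..?l}" using False by auto
        hence "i \<notin> ?J" using J by blast
        thus ?thesis using False False2 len by (simp add: part_def)
      qed
    qed
  qed
  have "is_partition nu"
    unfolding is_partition_def
  proof
    show "sorted_wrt (\<ge>) nu"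
      unfolding sorted_wrt_iff_nth_less
    proof (intro allI impI)
      fix i j assume ij: "i < j" "j < length nu"
      have "nu ! j = f (Suc j)" "nu ! i = f (Suc i)" using nth ij len by auto
      thus "nu ! j \<le> nu ! i" using ispfM[OF f, of "Suc i" "Suc j"] ij by simp
    qed
    show "\<forall>p\<in>set nu. 0 < p"
    proof
      fix p assume "p \<in> set nu"
      then obtain k where k: "k < ?l" "p = nu ! k" using len by (auto simp: in_set_conv_nth)
      thus "0 < p" using nth pos[of "Suc k"] by simp
    qed
  qed
  thus ?thesis using part_eq by blast
qed

lemma cellsf_addT:
  assumes T: "T \<subseteq> addS m"
  shows "cellsf (addT m T) = cellsf m \<union> (\<lambda>i. (i, Suc (m i))) ` T"
proof -
  have T1: "\<And>i. i \<in> T \<Longrightarrow> 1 \<le> i" using T by (auto simp: addS_def)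
  show ?thesis
  proof (rule set_eqI, rule iffI)
    fix u assume "u \<in> cellsf (addT m T)"
    then obtain i j where u: "u = (i, j)" "1 \<le> i" "1 \<le> j" "j \<le> m i + (if i \<in> T then 1 else 0)"
      by (auto simp: cellsf_def addT_def)
    show "u \<in> cellsf m \<union> (\<lambda>i. (i, Suc (m i))) ` T"
    proof (cases "j \<le> m i")
      case True thus ?thesis using u by (auto simp: cellsf_def)
    next
      case False
      hence "i \<in> T" "j = Suc (m i)" using u by (auto split: if_splits)
      thus ?thesis using u by auto
    qed
  next
    fix u assume "u \<in> cellsf m \<union> (\<lambda>i. (i, Suc (m i))) ` T"
    thus "u \<in> cellsf (addT m T)" using T1 by (auto simp: cellsf_def addT_def)
  qed
qed

lemma card_cellsf_addT:
  assumes mP: "ispf m" and T: "T \<subseteq> addS m"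
  shows "card (cellsf (addT m T)) = card (cellsf m) + card T"
proof -
  obtain L where L: "\<forall>i>L. m i = 0" using mP by (auto simp: ispf_def)
  have fC: "finite (cellsf m)" using finite_cellsf[OF L] .
  have fT: "finite T" using finite_addS[OF mP] T finite_subset by blast
  have disj: "cellsf m \<inter> (\<lambda>i. (i, Suc (m i))) ` T = {}" by (auto simp: cellsf_def)
  have inj: "inj_on (\<lambda>i. (i, Suc (m i))) T" by (auto simp: inj_on_def)
  show ?thesis unfolding cellsf_addT[OF T]
    using card_Un_disjoint[OF fC finite_imageI[OF fT] disj] card_image[OF inj] by simp
qed

lemma covers_to_T:
  assumes mu: "is_partition mu" and c: "covers nu mu"
  shows "\<exists>T. T \<subseteq> addS (part mu) \<and> T \<noteq> {} \<and> part nu = addT (part mu) T"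
proof -
  let ?m = "part mu" and ?n = "part nu"
  have nu: "is_partition nu" using c by (simp add: covers_def)
  have mP: "ispf ?m" and nP: "ispf ?n" using part_ispf mu nu by auto
  have sub: "cellsf ?m \<subseteq> cellsf ?n" using c by (simp add: covers_def cells_cellsf)
  have ne: "nu \<noteq> mu" using c by (simp add: covers_def)
  have D: "\<And>u v. u \<in> cellsf ?n - cellsf ?m \<Longrightarrow> v \<in> cellsf ?n - cellsf ?m \<Longrightarrow> u \<noteq> v \<Longrightarrow> fst u \<noteq> fst v \<and> snd u \<noteq> snd v"
    using c unfolding covers_def cells_cellsf by blast
  have le: "\<And>i. ?m i \<le> ?n i"
  proof -
    fix i show "?m i \<le> ?n i"
    proof (cases "1 \<le> i \<and> 1 \<le> ?m i")
      case True
      hence "(i, ?m i) \<in> cellsf ?m" by (simp add: cellsf_def)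
      hence "(i, ?m i) \<in> cellsf ?n" using sub by blast
      thus ?thesis by (simp add: cellsf_def)
    next
      case False
      thus ?thesis using ispf0[OF mP] by (cases i) auto
    qed
  qed
  have le1: "\<And>i. ?n i \<le> Suc (?m i)"
  proof (rule ccontr)
    fix i assume "\<not> ?n i \<le> Suc (?m i)"
    hence a: "Suc (Suc (?m i)) \<le> ?n i" by simp
    have i1: "1 \<le> i" using a ispf0[OF nP] by (cases i) auto
    have "(i, Suc (?m i)) \<in> cellsf ?n - cellsf ?m" "(i, Suc (Suc (?m i))) \<in> cellsf ?n - cellsf ?m"
      using a i1 by (auto simp: cellsf_def)
    thus False using D by fastforce
  qed
  let ?T = "{i. ?n i \<noteq> ?m i}"
  have eq: "?n = addT ?m ?T"
  proof
    fix i show "?n i = addT ?m ?T i" using le[of i] le1[of i] by (auto simp: addT_def)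
  qed
  have Tne: "?T \<noteq> {}"
  proof
    assume "?T = {}"
    hence "?n = ?m" by auto
    hence "nu = mu" using part_inj[OF nu mu] by simp
    thus False using ne by simp
  qed
  have Tsub: "?T \<subseteq> addS ?m"
  proof
    fix i assume i: "i \<in> ?T"
    have i1: "1 \<le> i" using i ispf0[OF mP] ispf0[OF nP] by (cases i) auto
    have ni: "?n i = Suc (?m i)" using i le[of i] le1[of i] by simp
    show "i \<in> addS ?m"
    proof (cases "i = 1")
      case True thus ?thesis by (simp add: addS_def)
    next
      case False
      hence i2: "2 \<le> i" using i1 by simp
      have mono: "?m i \<le> ?m (i - 1)" using ispfM[OF mP, of "i - 1" i] i2 by simp
      show ?thesis
      proof (rule ccontr)
        assume "i \<notin> addS ?m"
        hence meq: "?m i = ?m (i - 1)" using mono i1 False by (auto simp: addS_def)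
        have "?n i \<le> ?n (i - 1)" using ispfM[OF nP, of "i - 1" i] i2 by simp
        hence n1: "?n (i - 1) = Suc (?m (i - 1))" using ni meq le1[of "i - 1"] by simp
        have "(i - 1, Suc (?m (i - 1))) \<in> cellsf ?n - cellsf ?m" using n1 i2 by (auto simp: cellsf_def)
        moreover have "(i, Suc (?m i)) \<in> cellsf ?n - cellsf ?m" using ni i1 by (auto simp: cellsf_def)
        moreover have "(i - 1, Suc (?m (i - 1))) \<noteq> (i, Suc (?m i))" using i2 by simp
        ultimately show False using D meq by fastforce
      qed
    qed
  qed
  show ?thesis using eq Tne Tsub by blast
qed

lemma T_to_covers:
  assumes mu: "is_partition mu" and nu: "is_partition nu" and T: "T \<subseteq> addS (part mu)" "T \<noteq> {}"
    and eq: "part nu = addT (part mu) T"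
  shows "covers nu mu"
proof -
  let ?m = "part mu"
  have mP: "ispf ?m" using part_ispf mu by auto
  have T1: "\<And>i. i \<in> T \<Longrightarrow> 1 \<le> i" using T by (auto simp: addS_def)
  have sub: "cells mu \<subseteq> cells nu" unfolding cells_cellsf eq cellsf_addT[OF T(1)] by blast
  have ne: "nu \<noteq> mu"
  proof
    assume "nu = mu"
    obtain i where "i \<in> T" using T(2) by blast
    hence "part nu i \<noteq> part mu i" using eq by (simp add: addT_def)
    thus False using \<open>nu = mu\<close> by simp
  qed
  have diff: "cells nu - cells mu = (\<lambda>i. (i, Suc (?m i))) ` T"
    unfolding cells_cellsf eq cellsf_addT[OF T(1)] by (auto simp: cellsf_def)
  have D: "\<forall>u\<in>cells nu - cells mu. \<forall>v\<in>cells nu - cells mu. u \<noteq> v \<longrightarrow> fst u \<noteq> fst v \<and> snd u \<noteq> snd v"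
    unfolding diff
  proof (intro ballI impI)
    fix u v assume u: "u \<in> (\<lambda>i. (i, Suc (?m i))) ` T" and v: "v \<in> (\<lambda>i. (i, Suc (?m i))) ` T" and uv: "u \<noteq> v"
    obtain i where i: "i \<in> T" "u = (i, Suc (?m i))" using u by blast
    obtain i' where i': "i' \<in> T" "v = (i', Suc (?m i'))" using v by blast
    have ii: "i \<noteq> i'" using uv i i' by auto
    have key: "\<And>a b. a \<in> T \<Longrightarrow> b \<in> T \<Longrightarrow> a < b \<Longrightarrow> ?m b < ?m a"
    proof -
      fix a b assume ab: "a \<in> T" "b \<in> T" "a < b"
      have a1: "1 \<le> a" using T1 ab by simp
      have "b \<in> addS ?m" using T(1) ab by blast
      moreover have "b \<noteq> 1" using a1 ab by simp
      ultimately have "?m b < ?m (b - 1)" by (simp add: addS_def)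
      moreover have "?m (b - 1) \<le> ?m a" using ispfM[OF mP a1, of "b - 1"] ab by simp
      ultimately show "?m b < ?m a" by simp
    qed
    have "?m i \<noteq> ?m i'"
    proof (cases "i < i'")
      case True thus ?thesis using key[OF i(1) i'(1)] by simp
    next
      case False
      hence "i' < i" using ii by simp
      thus ?thesis using key[OF i'(1) i(1)] by simp
    qed
    thus "fst u \<noteq> fst v \<and> snd u \<noteq> snd v" using i i' ii by simp
  qed
  show ?thesis unfolding covers_def using nu sub ne D by blast
qed

lemma covers_image:
  assumes mu: "is_partition mu"
  shows "part ` {nu. covers nu mu} = addT (part mu) ` (Pow (addS (part mu)) - {{}})"
proof
  show "part ` {nu. covers nu mu} \<subseteq> addT (part mu) ` (Pow (addS (part mu)) - {{}})"
    using covers_to_T[OF mu] by fastforce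
  show "addT (part mu) ` (Pow (addS (part mu)) - {{}}) \<subseteq> part ` {nu. covers nu mu}"
  proof
    fix f assume "f \<in> addT (part mu) ` (Pow (addS (part mu)) - {{}})"
    then obtain T where T: "T \<subseteq> addS (part mu)" "T \<noteq> {}" "f = addT (part mu) T" by auto
    have "ispf f" using addT_ispf[OF part_ispf[OF mu] T(1)] T(3) by simp
    then obtain nu where nu: "is_partition nu" "part nu = f" using ispf_to_list by blast
    have "covers nu mu" using T_to_covers[OF mu nu(1) T(1) T(2)] nu(2) T(3) by simp
    thus "f \<in> part ` {nu. covers nu mu}" using nu(2) by blast
  qed
qed

lemma one_plus_gneg:
  fixes \<beta> v :: "'a::field"
  assumes "1 + \<beta> * v \<noteq> 0"
  shows "1 + \<beta> * gneg \<beta> v = 1 / (1 + \<beta> * v)"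
  using assms by (simp add: gneg_def gominus_def field_simps)

lemma wt_eq:
  fixes \<beta> :: "'a::field"
  assumes yne: "\<forall>k\<ge>1. 1 + \<beta> * y k \<noteq> 0"
  shows "wt \<beta> d y la mu = Pfac \<beta> (ypt \<beta> d y la) d * cfac \<beta> y d (part mu)"
proof -
  have "wt \<beta> d y la mu = (\<Prod>i=1..d. (1 + \<beta> * ypt \<beta> d y la i) * (1 + \<beta> * y (part mu i + d - i + 1)))"
    unfolding wt_def
  proof (intro prod.cong refl)
    fix i
    have nz: "1 + \<beta> * y (part la i + d - i + 1) \<noteq> 0" using yne by simp
    show "(1 + \<beta> * y (part mu i + d - i + 1)) / (1 + \<beta> * y (part la i + d - i + 1))
       = (1 + \<beta> * ypt \<beta> d y la i) * (1 + \<beta> * y (part mu i + d - i + 1))"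
      unfolding ypt_def one_plus_gneg[OF nz] by simp
  qed
  also have "\<dots> = Pfac \<beta> (ypt \<beta> d y la) d * cfac \<beta> y d (part mu)"
    unfolding Pfac_def cfac_def prod.distrib ..
  finally show ?thesis .
qed

theorem proposition4p1:
  fixes \<beta> :: "'a::field" and y :: "nat \<Rightarrow> 'a" and d :: nat and mu la :: "nat list"
  assumes "d \<ge> 1"
    and "is_partition mu" and "is_partition la"
    and "length mu \<le> d" and "length la \<le> d"
    and "\<forall>k\<ge>1. 1 + \<beta> * y k \<noteq> 0"
  shows "G \<beta> d mu (ypt \<beta> d y la) y * (wt \<beta> d y la mu - 1)
       = (\<Sum>nu\<in>{nu. covers nu mu}. \<beta> ^ (psize nu - psize mu) * G \<beta> d nu (ypt \<beta> d y la) y)"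
proof -
  note mu = assms(2) and yne = assms(6)
  let ?x = "ypt \<beta> d y la" and ?m = "part mu"
  let ?Gf = "\<lambda>f. Gc \<beta> d (cellsf f) ?x y"
  have mP: "ispf ?m" using part_ispf[OF mu] .
  have fA: "finite (Pow (addS ?m))" using finite_addS[OF mP] by simp
  have P: "Pfac \<beta> ?x d * cfac \<beta> y d ?m * ?Gf ?m = (\<Sum>T\<in>Pow (addS ?m). \<beta> ^ card T * ?Gf (addT ?m T))"
    by (rule pieri_fun[OF yne mP])
  have e0: "addT ?m {} = ?m" by (simp add: addT_def)
  have "G \<beta> d mu ?x y * (wt \<beta> d y la mu - 1) = Pfac \<beta> ?x d * cfac \<beta> y d ?m * ?Gf ?m - ?Gf ?m"
    unfolding G_Gc wt_eq[OF yne] by (simp add: algebra_simps)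
  also have "\<dots> = (\<Sum>T\<in>Pow (addS ?m) - {{}}. \<beta> ^ card T * ?Gf (addT ?m T))"
    unfolding P using sum.remove[OF fA, of "{}" "\<lambda>T. \<beta> ^ card T * ?Gf (addT ?m T)"] e0 by simp
  finally have L: "G \<beta> d mu ?x y * (wt \<beta> d y la mu - 1) = (\<Sum>T\<in>Pow (addS ?m) - {{}}. \<beta> ^ card T * ?Gf (addT ?m T))" .
  let ?h = "\<lambda>f. \<beta> ^ (card (cellsf f) - card (cellsf ?m)) * ?Gf f"
  have "(\<Sum>nu\<in>{nu. covers nu mu}. \<beta> ^ (psize nu - psize mu) * G \<beta> d nu ?x y)
      = (\<Sum>nu\<in>{nu. covers nu mu}. ?h (part nu))"
    by (simp add: psize_card G_Gc)
  also have "\<dots> = (\<Sum>f\<in>part ` {nu. covers nu mu}. ?h f)"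
  proof -
    have inj: "inj_on part {nu. covers nu mu}"
      by (rule inj_onI) (auto simp: covers_def intro: part_inj)
    show ?thesis using sum.reindex[OF inj, of ?h] by (simp add: comp_def)
  qed
  also have "\<dots> = (\<Sum>f\<in>addT ?m ` (Pow (addS ?m) - {{}}). ?h f)" unfolding covers_image[OF mu] ..
  also have "\<dots> = (\<Sum>T\<in>Pow (addS ?m) - {{}}. ?h (addT ?m T))"
    using sum.reindex[OF addT_inj, of ?h ?m "Pow (addS ?m) - {{}}"] by (simp add: comp_def)
  also have "\<dots> = (\<Sum>T\<in>Pow (addS ?m) - {{}}. \<beta> ^ card T * ?Gf (addT ?m T))"
    using card_cellsf_addT[OF mP] by (intro sum.cong refl) auto
  finally show ?thesis using L by simp
qed

end
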